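(* Let $a<b$ and let $U_n\subset C^n([a,b],\mathbb{K})$ (with $\mathbb{K}=\mathbb{R}$ or $\mathbb{C}$) be a $\mathbb{K}$-linear subspace of dimension $n+1$ which possesses a non-negative Bernstein basis $p_{n,0},\dots,p_{n,n}$ for $\{a,b\}$. Let $f_0\in U_n$ be strictly positive on $[a,b]$, and let $f_1\in U_n$ be such that $f_1/f_0$ is strictly increasing on $[a,b]$. Assume that $D_{f_0}U_n$ possesses a non-negative Bernstein basis $q_{n-1,0},\dots,q_{n-1,n-1}$ for $\{a,b\}$. If the coefficients $w_0,\dots,w_{n-1}$ defined by $$\frac{d}{dx}\frac{f_1}{f_0}=\sum_{k=0}^{n-1}w_k\,q_{n-1,k}$$ are all non-negative, then there exist points $t_0,\dots,t_n\in[a,b]$ with $t_0=a$ and $t_n=b$ and positive numbers $\alpha_0,\dots,\alpha_n$ such that the operator $B_n:C[a,b]\to U_n$, $B_nf=\sum_{k=0}^n f(t_k)\alpha_k p_{n,k}$, satisfies $B_nf_0=f_0$ and $B_nf_1=f_1$.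
   Context: A function $f\in C^m([a,b],\mathbb{K})$ has a zero of order (multiplicity) $k$ at a point $c\in[a,b]$ if $f(c)=f'(c)=\dots=f^{(k-1)}(c)=0$ and $f^{(k)}(c)\neq0$ (one-sided derivatives at endpoints). If $V\subset C^{m}([a,b],\mathbb{K})$ is a linear space of dimension $m+1$, a system $p_{m,0},\dots,p_{m,m}$ in $V$ is a Bernstein basis for $\{a,b\}$ if each $p_{m,k}$ has a zero of order exactly $k$ at $a$ and a zero of order exactly $m-k$ at $b$ (it is automatically a basis of $V$). It is non-negative if every $p_{m,k}$ is real-valued and $p_{m,k}(x)\ge 0$ for all $x\in[a,b]$. For a strictly positive (real-valued, $>0$) $f_0\in U_n$, the space of derivatives modulo $f_0$ is $D_{f_0}U_n=\{\frac{d}{dx}(f/f_0): f\in U_n\}$, an $n$-dimensional subspace of $C^{n-1}([a,b],\mathbb{K})$. *)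

theory Defs
  imports "HOL-Analysis.Analysis" "HOL-Library.Function_Algebras"
begin

text \<open>Functions on [a,b] are represented as functions real \<Rightarrow> 'k that vanish outside [a,b]
  (extensional convention).  Scalars 'k: a real normed field (i.e. R or C).\<close>

definition ext_on :: "real \<Rightarrow> real \<Rightarrow> (real \<Rightarrow> 'k::zero) \<Rightarrow> real \<Rightarrow> 'k" where
  "ext_on a b g = (\<lambda>x. if x \<in> {a..b} then g x else 0)"

definition fscale :: "'k::real_normed_field \<Rightarrow> (real \<Rightarrow> 'k) \<Rightarrow> real \<Rightarrow> 'k" where
  "fscale c f = (\<lambda>x. c * f x)"

fun nderiv :: "nat \<Rightarrow> real \<Rightarrow> real \<Rightarrow> (real \<Rightarrow> 'k::real_normed_vector) \<Rightarrow> real \<Rightarrow> 'k" where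
  "nderiv 0 a b f = f"
| "nderiv (Suc k) a b f = (\<lambda>x. vector_derivative (nderiv k a b f) (at x within {a..b}))"

definition Cn :: "nat \<Rightarrow> real \<Rightarrow> real \<Rightarrow> (real \<Rightarrow> 'k::real_normed_vector) set" where
  "Cn m a b = {f. (\<forall>x. x \<notin> {a..b} \<longrightarrow> f x = 0)
     \<and> (\<forall>k<m. \<forall>x\<in>{a..b}. (nderiv k a b f has_vector_derivative nderiv (Suc k) a b f x) (at x within {a..b}))
     \<and> continuous_on {a..b} (nderiv m a b f)}"

definition zero_order :: "real \<Rightarrow> real \<Rightarrow> (real \<Rightarrow> 'k::real_normed_vector) \<Rightarrow> real \<Rightarrow> nat \<Rightarrow> bool" where
  "zero_order a b f c k \<longleftrightarrow> (\<forall>j<k. nderiv j a b f c = 0) \<and> nderiv k a b f c \<noteq> 0"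

definition bernstein_basis :: "real \<Rightarrow> real \<Rightarrow> nat \<Rightarrow> (nat \<Rightarrow> real \<Rightarrow> 'k::real_normed_vector) \<Rightarrow> bool" where
  "bernstein_basis a b m p \<longleftrightarrow> (\<forall>k\<le>m. zero_order a b (p k) a k \<and> zero_order a b (p k) b (m - k))"

definition nonneg_system :: "real \<Rightarrow> real \<Rightarrow> nat \<Rightarrow> (nat \<Rightarrow> real \<Rightarrow> 'k::real_normed_algebra_1) \<Rightarrow> bool" where
  "nonneg_system a b m p \<longleftrightarrow> (\<forall>k\<le>m. \<forall>x\<in>{a..b}. \<exists>r::real. r \<ge> 0 \<and> p k x = of_real r)"

definition Dmod :: "real \<Rightarrow> real \<Rightarrow> (real \<Rightarrow> 'k::real_normed_field) \<Rightarrow> (real \<Rightarrow> 'k) set \<Rightarrow> (real \<Rightarrow> 'k) set" where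
  "Dmod a b f0 U = {ext_on a b (nderiv 1 a b (\<lambda>x. f x / f0 x)) | f. f \<in> U}"

end

theory Submission
  imports Defs
begin

lemma nderiv_shift: "nderiv j a b (nderiv 1 a b f) = nderiv (Suc j) a b f"
proof (induction j)
  case 0 show ?case by simp
next
  case (Suc j)
  have "nderiv (Suc j) a b (nderiv 1 a b f) = (\<lambda>x. vector_derivative (nderiv j a b (nderiv 1 a b f)) (at x within {a..b}))"
    by (rule nderiv.simps(2))
  also have "\<dots> = (\<lambda>x. vector_derivative (nderiv (Suc j) a b f) (at x within {a..b}))" by (simp only: Suc.IH)
  also have "\<dots> = nderiv (Suc (Suc j)) a b f" by (rule nderiv.simps(2)[symmetric])
  finally show ?case .
qed

lemma nderiv_shift0: "nderiv j a b (nderiv (Suc 0) a b f) = nderiv (Suc j) a b f"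
  using nderiv_shift[of j a b f] by simp

declare nderiv.simps(2)[simp del]

lemma nderiv_Suc': "nderiv (Suc j) a b f = nderiv j a b (nderiv 1 a b f)"
  by (rule nderiv_shift[symmetric])

lemma vd_cong:
  assumes "x \<in> S" "\<And>y. y \<in> S \<Longrightarrow> f y = g y"
  shows "(f has_vector_derivative v) (at x within S) \<longleftrightarrow> (g has_vector_derivative v) (at x within S)"
  using has_vector_derivative_weaken[of f v x S S g] has_vector_derivative_weaken[of g v x S S f] assms
  by auto

lemma vector_derivative_cong_within:
  assumes "x \<in> S" "\<And>y. y \<in> S \<Longrightarrow> f y = g y"
  shows "vector_derivative f (at x within S) = vector_derivative g (at x within S)"
  unfolding vector_derivative_def using vd_cong[OF assms] by simp

lemma nderiv_cong_all:
  assumes "\<And>x. x \<in> {a..b} \<Longrightarrow> f x = g x"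
  shows "\<forall>x\<in>{a..b}. nderiv j a b f x = nderiv j a b g x"
proof (induction j)
  case 0 then show ?case using assms by simp
next
  case (Suc j) show ?case
  proof
    fix x assume x: "x \<in> {a..b}"
    show "nderiv (Suc j) a b f x = nderiv (Suc j) a b g x"
      using vector_derivative_cong_within[of x "{a..b}" "nderiv j a b f" "nderiv j a b g"] x Suc.IH
      by (simp add: nderiv.simps(2))
  qed
qed

lemma nderiv_cong:
  assumes "\<And>x. x \<in> {a..b} \<Longrightarrow> f x = g x" "x \<in> {a..b}"
  shows "nderiv j a b f x = nderiv j a b g x"
  using nderiv_cong_all[of a b f g j] assms by blast

definition Ck :: "nat \<Rightarrow> real \<Rightarrow> real \<Rightarrow> (real \<Rightarrow> 'k::real_normed_vector) \<Rightarrow> bool" where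
  "Ck m a b f \<longleftrightarrow> (\<forall>j<m. \<forall>x\<in>{a..b}. (nderiv j a b f has_vector_derivative nderiv (Suc j) a b f x) (at x within {a..b}))
     \<and> continuous_on {a..b} (nderiv m a b f)"

lemma Cn_Ck: "f \<in> Cn m a b \<Longrightarrow> Ck m a b f"
  by (simp add: Cn_def Ck_def)

lemma deriv_eq:
  assumes ab: "a < b" and "x \<in> {a..b}" "(f has_vector_derivative v) (at x within {a..b})"
  shows "nderiv 1 a b f x = v"
  using vector_derivative_within_cbox[of a b x f v] assms by (simp add: nderiv.simps(2))

lemma Ck_transfer:
  assumes "\<And>x. x \<in> {a..b} \<Longrightarrow> f x = g x" and "Ck m a b f"
  shows "Ck m a b g"
proof -
  have e: "\<And>j x. x \<in> {a..b} \<Longrightarrow> nderiv j a b f x = nderiv j a b g x"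
    using nderiv_cong[of a b f g] assms(1) by blast
  have "(nderiv j a b g has_vector_derivative nderiv (Suc j) a b g x) (at x within {a..b})"
    if "j < m" "x \<in> {a..b}" for j x
  proof -
    have "(nderiv j a b f has_vector_derivative nderiv (Suc j) a b f x) (at x within {a..b})"
      using assms(2) that unfolding Ck_def by blast
    then have "(nderiv j a b g has_vector_derivative nderiv (Suc j) a b f x) (at x within {a..b})"
      by (rule has_vector_derivative_weaken) (use that e in auto)
    then show ?thesis using e[OF that(2), of "Suc j"] by simp
  qed
  moreover have "continuous_on {a..b} (nderiv m a b g)"
    using assms(2) e unfolding Ck_def by (metis continuous_on_cong)
  ultimately show ?thesis unfolding Ck_def by blast
qed

lemma Ck_cong:
  assumes "\<And>x. x \<in> {a..b} \<Longrightarrow> f x = g x"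
  shows "Ck m a b f \<longleftrightarrow> Ck m a b g"
  using Ck_transfer[of a b f g m] Ck_transfer[of a b g f m] assms by metis

lemma Ck_Suc: "Ck (Suc m) a b f \<longleftrightarrow>
   (\<forall>x\<in>{a..b}. (f has_vector_derivative nderiv 1 a b f x) (at x within {a..b})) \<and> Ck m a b (nderiv 1 a b f)"
proof -
  have "(\<forall>j<Suc m. P j) \<longleftrightarrow> P 0 \<and> (\<forall>j<m. P (Suc j))" for P
    using less_Suc_eq_0_disj by auto
  then show ?thesis unfolding Ck_def nderiv_shift by simp
qed

lemma Ck_SucI:
  assumes ab: "a < b" and d: "\<And>x. x \<in> {a..b} \<Longrightarrow> (f has_vector_derivative f' x) (at x within {a..b})"
    and c: "Ck m a b f'"
  shows "Ck (Suc m) a b f"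
proof -
  have e: "\<And>x. x \<in> {a..b} \<Longrightarrow> nderiv 1 a b f x = f' x" using deriv_eq[OF ab] d by blast
  show ?thesis unfolding Ck_Suc using d e c Ck_cong[of a b "nderiv 1 a b f" f' m] by auto
qed

lemma Ck_SucD:
  assumes ab: "a < b" and "Ck (Suc m) a b f"
  shows "\<And>x. x \<in> {a..b} \<Longrightarrow> (f has_vector_derivative nderiv 1 a b f x) (at x within {a..b})"
    "Ck m a b (nderiv 1 a b f)"
  using assms unfolding Ck_Suc by auto

lemma Ck_0: "Ck 0 a b f \<longleftrightarrow> continuous_on {a..b} f"
  by (simp add: Ck_def)

lemma Ck_Suc_mono: "Ck (Suc m) a b f \<Longrightarrow> Ck m a b f"
  unfolding Ck_def
  using continuous_on_vector_derivative[of "{a..b}" "nderiv m a b f" "nderiv (Suc m) a b f"]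
  by auto

lemma Ck_mono: "Ck m a b f \<Longrightarrow> j \<le> m \<Longrightarrow> Ck j a b f"
  by (induction m) (auto simp: le_Suc_eq dest: Ck_Suc_mono)


context fixes a b :: real assumes ab: "a < b" begin

lemma Ck_const: "Ck m a b (\<lambda>x. c :: 'k::real_normed_vector)"
proof (induction m arbitrary: c)
  case 0 then show ?case by (simp add: Ck_0)
next
  case (Suc m) show ?case
    by (rule Ck_SucI[OF ab, where f'="\<lambda>x. 0"]) (auto intro: has_vector_derivative_const Suc.IH)
qed

lemma Ck_add: "Ck m a b f \<Longrightarrow> Ck m a b g \<Longrightarrow> Ck m a b (\<lambda>x. f x + g x :: 'k::real_normed_vector)"
proof (induction m arbitrary: f g)
  case 0 then show ?case by (simp add: Ck_0 continuous_on_add)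
next
  case (Suc m) show ?case
    by (rule Ck_SucI[OF ab, where f'="\<lambda>x. nderiv 1 a b f x + nderiv 1 a b g x"])
      (use Ck_SucD[OF ab Suc.prems(1)] Ck_SucD[OF ab Suc.prems(2)] in \<open>auto intro: has_vector_derivative_add Suc.IH\<close>)
qed

lemma Ck_cmult: "Ck m a b f \<Longrightarrow> Ck m a b (\<lambda>x. c * f x :: 'k::real_normed_field)"
proof (induction m arbitrary: f)
  case 0 then show ?case by (simp add: Ck_0 continuous_on_mult_left)
next
  case (Suc m) show ?case
    by (rule Ck_SucI[OF ab, where f'="\<lambda>x. c * nderiv 1 a b f x"])
      (use Ck_SucD[OF ab Suc.prems(1)] in \<open>auto intro: has_vector_derivative_mult_right Suc.IH\<close>)
qed

lemma Ck_minus: "Ck m a b f \<Longrightarrow> Ck m a b (\<lambda>x. - f x :: 'k::real_normed_field)"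
  using Ck_cmult[of m f "-1"] by simp

lemma Ck_mult: "Ck m a b f \<Longrightarrow> Ck m a b g \<Longrightarrow> Ck m a b (\<lambda>x. f x * g x :: 'k::real_normed_field)"
proof (induction m arbitrary: f g)
  case 0 then show ?case by (simp add: Ck_0 continuous_on_mult)
next
  case (Suc m)
  note df = Ck_SucD[OF ab Suc.prems(1)] and dg = Ck_SucD[OF ab Suc.prems(2)]
  have fm: "Ck m a b f" "Ck m a b g" using Suc.prems by (auto intro: Ck_Suc_mono)
  show ?case
    by (rule Ck_SucI[OF ab, where f'="\<lambda>x. f x * nderiv 1 a b g x + nderiv 1 a b f x * g x"])
      (use df dg fm in \<open>auto intro: has_vector_derivative_mult Suc.IH Ck_add\<close>)
qed

lemma Ck_inverse: "Ck m a b f \<Longrightarrow> (\<forall>x\<in>{a..b}. f x \<noteq> 0) \<Longrightarrow> Ck m a b (\<lambda>x. inverse (f x) :: 'k::real_normed_field)"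
proof (induction m arbitrary: f)
  case 0 then show ?case by (simp add: Ck_0 continuous_on_inverse)
next
  case (Suc m)
  note df = Ck_SucD[OF ab Suc.prems(1)]
  have fm: "Ck m a b f" using Suc.prems by (auto intro: Ck_Suc_mono)
  have IH: "Ck m a b (\<lambda>x. inverse (f x))" using Suc.IH[OF fm Suc.prems(2)] .
  have d: "((\<lambda>x. inverse (f x)) has_vector_derivative - (inverse (f x) * nderiv 1 a b f x * inverse (f x))) (at x within {a..b})"
    if x: "x \<in> {a..b}" for x
  proof -
    have "(f has_derivative (\<lambda>h. h *\<^sub>R nderiv 1 a b f x)) (at x within {a..b})"
      using df(1)[OF x] by (simp add: has_vector_derivative_def)
    from Deriv.has_derivative_inverse[OF _ this] Suc.prems(2) x
    have "((\<lambda>x. inverse (f x)) has_derivative (\<lambda>h. - (inverse (f x) * (h *\<^sub>R nderiv 1 a b f x) * inverse (f x)))) (at x within {a..b})"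
      by auto
    then show ?thesis unfolding has_vector_derivative_def
      by (rule has_derivative_eq_rhs) (auto simp: fun_eq_iff scaleR_conv_of_real algebra_simps)
  qed
  show ?case
    by (rule Ck_SucI[OF ab, where f'="\<lambda>x. - (inverse (f x) * nderiv 1 a b f x * inverse (f x))"])
      (use d df IH in \<open>auto intro!: Ck_minus Ck_mult\<close>)
qed

lemma Ck_divide: "Ck m a b f \<Longrightarrow> Ck m a b g \<Longrightarrow> (\<forall>x\<in>{a..b}. g x \<noteq> 0) \<Longrightarrow> Ck m a b (\<lambda>x. f x / g x :: 'k::real_normed_field)"
  using Ck_mult[OF _ Ck_inverse, of m f g] by (simp add: divide_inverse)

lemma Ck_sum: "finite I \<Longrightarrow> (\<forall>i\<in>I. Ck m a b (F i)) \<Longrightarrow> Ck m a b (\<lambda>x. \<Sum>i\<in>I. F i x :: 'k::real_normed_vector)"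
  by (induction I rule: finite_induct) (auto intro: Ck_add Ck_const)

lemma nderiv_zero: "x \<in> {a..b} \<Longrightarrow> nderiv j a b (\<lambda>x. 0 :: 'k::real_normed_vector) x = 0"
proof (induction j arbitrary: x)
  case 0 then show ?case by simp
next
  case (Suc j)
  have "nderiv (Suc j) a b (\<lambda>x. 0::'k) x = nderiv j a b (nderiv 1 a b (\<lambda>x. 0::'k)) x" by (simp only: nderiv_shift)
  also have "\<dots> = nderiv j a b (\<lambda>x. 0::'k) x"
  proof (rule nderiv_cong[OF _ Suc.prems])
    fix y assume "y \<in> {a..b}"
    then show "nderiv 1 a b (\<lambda>x. 0::'k) y = 0"
      by (intro deriv_eq[OF ab]) (auto intro: has_vector_derivative_const)
  qed
  finally show ?case using Suc.IH[OF Suc.prems] by simp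
qed


lemma nderiv_add: "Ck m a b f \<Longrightarrow> Ck m a b g \<Longrightarrow> j \<le> m \<Longrightarrow> x \<in> {a..b} \<Longrightarrow>
  nderiv j a b (\<lambda>x. f x + g x :: 'k::real_normed_vector) x = nderiv j a b f x + nderiv j a b g x"
proof (induction j arbitrary: m f g x)
  case 0 then show ?case by simp
next
  case (Suc j)
  then obtain m' where m: "m = Suc m'" by (cases m) auto
  note df = Ck_SucD[OF ab Suc.prems(1)[unfolded m]] and dg = Ck_SucD[OF ab Suc.prems(2)[unfolded m]]
  have "nderiv (Suc j) a b (\<lambda>x. f x + g x) x = nderiv j a b (nderiv 1 a b (\<lambda>x. f x + g x)) x" by (simp only: nderiv_shift)
  also have "\<dots> = nderiv j a b (\<lambda>x. nderiv 1 a b f x + nderiv 1 a b g x) x"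
  proof (rule nderiv_cong[OF _ Suc.prems(4)])
    fix y assume y: "y \<in> {a..b}"
    then show "nderiv 1 a b (\<lambda>x. f x + g x) y = nderiv 1 a b f y + nderiv 1 a b g y"
      by (intro deriv_eq[OF ab] y has_vector_derivative_add df(1) dg(1))
  qed
  also have "\<dots> = nderiv j a b (nderiv 1 a b f) x + nderiv j a b (nderiv 1 a b g) x"
    using Suc.IH[OF df(2) dg(2)] Suc.prems m by auto
  finally show ?case by (simp only: nderiv_shift)
qed

lemma nderiv_cmult: "Ck m a b f \<Longrightarrow> j \<le> m \<Longrightarrow> x \<in> {a..b} \<Longrightarrow>
  nderiv j a b (\<lambda>x. c * f x :: 'k::real_normed_field) x = c * nderiv j a b f x"
proof (induction j arbitrary: m f x)
  case 0 then show ?case by simp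
next
  case (Suc j)
  then obtain m' where m: "m = Suc m'" by (cases m) auto
  note df = Ck_SucD[OF ab Suc.prems(1)[unfolded m]]
  have "nderiv (Suc j) a b (\<lambda>x. c * f x) x = nderiv j a b (nderiv 1 a b (\<lambda>x. c * f x)) x" by (simp only: nderiv_shift)
  also have "\<dots> = nderiv j a b (\<lambda>x. c * nderiv 1 a b f x) x"
  proof (rule nderiv_cong[OF _ Suc.prems(3)])
    fix y assume y: "y \<in> {a..b}"
    then show "nderiv 1 a b (\<lambda>x. c * f x) y = c * nderiv 1 a b f y"
      by (intro deriv_eq[OF ab] y has_vector_derivative_mult_right df(1))
  qed
  also have "\<dots> = c * nderiv j a b (nderiv 1 a b f) x"
    using Suc.IH[OF df(2)] Suc.prems m by auto
  finally show ?case by (simp only: nderiv_shift)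
qed

lemma nderiv_sum: "finite I \<Longrightarrow> (\<forall>i\<in>I. Ck m a b (F i)) \<Longrightarrow> j \<le> m \<Longrightarrow> x \<in> {a..b} \<Longrightarrow>
  nderiv j a b (\<lambda>x. \<Sum>i\<in>I. F i x :: 'k::real_normed_vector) x = (\<Sum>i\<in>I. nderiv j a b (F i) x)"
proof (induction I rule: finite_induct)
  case empty then show ?case by (simp add: nderiv_zero)
next
  case (insert i I)
  have "nderiv j a b (\<lambda>x. \<Sum>i\<in>insert i I. F i x) x = nderiv j a b (\<lambda>x. F i x + (\<Sum>i\<in>I. F i x)) x"
    using insert by simp
  also have "\<dots> = nderiv j a b (F i) x + nderiv j a b (\<lambda>x. \<Sum>i\<in>I. F i x) x"
    by (rule nderiv_add[of m]) (use insert in \<open>auto intro: Ck_sum\<close>)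
  finally show ?case using insert by simp
qed

lemma nderiv_lincomb: "finite I \<Longrightarrow> (\<forall>i\<in>I. Ck m a b (F i)) \<Longrightarrow> j \<le> m \<Longrightarrow> x \<in> {a..b} \<Longrightarrow>
  nderiv j a b (\<lambda>x. \<Sum>i\<in>I. c i * F i x :: 'k::real_normed_field) x = (\<Sum>i\<in>I. c i * nderiv j a b (F i) x)"
proof -
  assume h: "finite I" "\<forall>i\<in>I. Ck m a b (F i)" "j \<le> m" "x \<in> {a..b}"
  have "nderiv j a b (\<lambda>x. \<Sum>i\<in>I. c i * F i x) x = (\<Sum>i\<in>I. nderiv j a b (\<lambda>x. c i * F i x) x)"
    using nderiv_sum[of I m "\<lambda>i x. c i * F i x" j x] h by (auto intro: Ck_cmult)
  also have "\<dots> = (\<Sum>i\<in>I. c i * nderiv j a b (F i) x)"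
    using h by (intro sum.cong refl nderiv_cmult[of m]) auto
  finally show ?thesis .
qed

end

context fixes a b :: real assumes ab: "a < b" begin

lemma zero_mult:
  "Ck m a b f \<Longrightarrow> Ck m a b g \<Longrightarrow> k \<le> m \<Longrightarrow> c \<in> {a..b} \<Longrightarrow> (\<forall>i<k. nderiv i a b f c = 0) \<Longrightarrow>
   (\<forall>i<k. nderiv i a b (\<lambda>x. f x * g x :: 'k::real_normed_field) c = 0) \<and>
   nderiv k a b (\<lambda>x. f x * g x) c = nderiv k a b f c * g c"
proof (induction k arbitrary: m f g)
  case 0 then show ?case by simp
next
  case (Suc k)
  then obtain m' where m: "m = Suc m'" by (cases m) auto
  note df = Ck_SucD[OF ab Suc.prems(1)[unfolded m]] and dg = Ck_SucD[OF ab Suc.prems(2)[unfolded m]]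
  have fm: "Ck m' a b f" "Ck m' a b g" using Suc.prems m by (auto intro: Ck_Suc_mono)
  have km: "k \<le> m'" using Suc.prems m by simp
  have c: "c \<in> {a..b}" by fact
  have E: "\<forall>y\<in>{a..b}. nderiv 1 a b (\<lambda>x. f x * g x) y = f y * nderiv 1 a b g y + nderiv 1 a b f y * g y"
  proof
    fix y assume y: "y \<in> {a..b}"
    show "nderiv 1 a b (\<lambda>x. f x * g x) y = f y * nderiv 1 a b g y + nderiv 1 a b f y * g y"
      by (rule deriv_eq[OF ab y]) (rule has_vector_derivative_mult[OF df(1)[OF y] dg(1)[OF y]])
  qed
  have IH1: "(\<forall>i<k. nderiv i a b (\<lambda>x. f x * nderiv 1 a b g x) c = 0) \<and>
      nderiv k a b (\<lambda>x. f x * nderiv 1 a b g x) c = nderiv k a b f c * nderiv 1 a b g c"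
    by (rule Suc.IH[OF fm(1) dg(2) km c]) (use Suc.prems(5) in auto)
  have IH2: "(\<forall>i<k. nderiv i a b (\<lambda>x. nderiv 1 a b f x * g x) c = 0) \<and>
      nderiv k a b (\<lambda>x. nderiv 1 a b f x * g x) c = nderiv k a b (nderiv 1 a b f) c * g c"
    by (rule Suc.IH[OF df(2) fm(2) km c]) (use Suc.prems(5) in \<open>auto simp: nderiv_shift nderiv_shift0\<close>)
  have D: "nderiv (Suc i) a b (\<lambda>x. f x * g x) c =
      nderiv i a b (\<lambda>x. f x * nderiv 1 a b g x) c + nderiv i a b (\<lambda>x. nderiv 1 a b f x * g x) c"
    if i: "i \<le> k" for i
  proof -
    have "nderiv (Suc i) a b (\<lambda>x. f x * g x) c = nderiv i a b (nderiv 1 a b (\<lambda>x. f x * g x)) c"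
      by (simp only: nderiv_shift)
    also have "\<dots> = nderiv i a b (\<lambda>y. f y * nderiv 1 a b g y + nderiv 1 a b f y * g y) c"
      by (rule nderiv_cong[OF _ c]) (use E in auto)
    also have "\<dots> = nderiv i a b (\<lambda>x. f x * nderiv 1 a b g x) c + nderiv i a b (\<lambda>x. nderiv 1 a b f x * g x) c"
      by (rule nderiv_add[OF ab, of m']) (use fm df dg i km c in \<open>auto intro: Ck_mult[OF ab]\<close>)
    finally show ?thesis .
  qed
  have f0: "f c = 0" using Suc.prems(5) by (metis nderiv.simps(1) zero_less_Suc)
  have "\<forall>i<Suc k. nderiv i a b (\<lambda>x. f x * g x) c = 0"
  proof (intro allI impI)
    fix i assume i: "i < Suc k"
    show "nderiv i a b (\<lambda>x. f x * g x) c = 0"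
    proof (cases i)
      case 0 then show ?thesis using f0 by simp
    next
      case (Suc i') then show ?thesis using D[of i'] IH1 IH2 i by auto
    qed
  qed
  moreover have "nderiv (Suc k) a b (\<lambda>x. f x * g x) c = nderiv (Suc k) a b f c * g c"
    using D[of k] IH1 IH2 Suc.prems(5) by (simp add: nderiv_shift nderiv_shift0)
  ultimately show ?case by blast
qed

end

lemma closed_reals: "closed (range (of_real :: real \<Rightarrow> 'k::real_normed_div_algebra))"
proof (unfold closed_sequential_limits, intro allI impI)
  fix x :: "nat \<Rightarrow> 'k" and l
  assume h: "(\<forall>n. x n \<in> range of_real) \<and> x \<longlonglongrightarrow> l"
  then have "\<forall>n. \<exists>s. x n = of_real s" by blast
  then obtain r where r: "\<forall>n. x n = of_real (r n)" using choice[of "\<lambda>n s. x n = of_real s"] by blast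
  have xe: "x = (\<lambda>n. of_real (r n))" using r by (simp add: fun_eq_iff)
  have "Cauchy x" using h LIMSEQ_imp_Cauchy by blast
  then have "Cauchy r" unfolding Cauchy_def xe dist_of_real .
  then obtain c where "r \<longlonglongrightarrow> c" using Cauchy_convergent_iff convergent_def by blast
  then have "(\<lambda>n. of_real (r n) :: 'k) \<longlonglongrightarrow> of_real c" by (rule tendsto_of_real)
  then have "l = of_real c" using h LIMSEQ_unique xe by metis
  then show "l \<in> range of_real" by simp
qed

lemma vd_quot:
  fixes f :: "real \<Rightarrow> 'k::real_normed_vector"
  assumes "(f has_vector_derivative v) (at x within S)"
  shows "((\<lambda>y. (f y - f x) /\<^sub>R (y - x)) \<longlongrightarrow> v) (at x within S)"
proof -
  have 1: "((\<lambda>y. norm (f y - f x - (y - x) *\<^sub>R v) / norm (y - x)) \<longlongrightarrow> 0) (at x within S)"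
    using assms by (simp add: has_vector_derivative_def has_derivative_iff_norm)
  have "\<forall>\<^sub>F y in at x within S. norm (f y - f x - (y - x) *\<^sub>R v) / norm (y - x) = norm ((f y - f x) /\<^sub>R (y - x) - v)"
  proof (rule eventually_at_filter[THEN iffD2], rule always_eventually, intro allI impI)
    fix y assume "y \<noteq> x"
    then have e: "(1 / (y - x)) *\<^sub>R ((y - x) *\<^sub>R v) = v" by simp
    have "(f y - f x) /\<^sub>R (y - x) - v = (1 / (y - x)) *\<^sub>R (f y - f x - (y - x) *\<^sub>R v)"
      unfolding scaleR_diff_right[of "1 / (y - x)" "f y - f x"] e by (simp add: divide_inverse)
    then show "norm (f y - f x - (y - x) *\<^sub>R v) / norm (y - x) = norm ((f y - f x) /\<^sub>R (y - x) - v)"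
      by (simp add: divide_inverse abs_inverse)
  qed
  from Lim_transform_eventually[OF 1 this]
  have "((\<lambda>y. (f y - f x) /\<^sub>R (y - x) - v) \<longlongrightarrow> 0) (at x within S)"
    by (simp add: tendsto_norm_zero_iff)
  then show ?thesis by (simp add: LIM_zero_iff)
qed

definition rp :: "'k::real_normed_algebra_1 \<Rightarrow> real" where "rp z = (SOME r. z = of_real r)"

lemma rp: "z \<in> range of_real \<Longrightarrow> of_real (rp z) = z"
  unfolding rp_def by (metis (mono_tags, lifting) rangeE someI)

lemma rp_of_real[simp]: "rp (of_real r :: 'k::real_normed_algebra_1) = r"
  using rp[of "of_real r :: 'k"] by (metis of_real_eq_iff rangeI)

context fixes a b :: real assumes ab: "a < b" begin

lemma nonbot: "x \<in> {a..b} \<Longrightarrow> at x within {a..b} \<noteq> bot"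
  using ab by (simp add: trivial_limit_within)

lemma deriv_real:
  fixes f :: "real \<Rightarrow> 'k::real_normed_field"
  assumes x: "x \<in> {a..b}" and r: "\<forall>y\<in>{a..b}. f y \<in> range of_real"
    and d: "(f has_vector_derivative v) (at x within {a..b})"
  shows "v \<in> range of_real"
proof (rule Lim_in_closed_set[OF closed_reals _ nonbot[OF x] vd_quot[OF d]])
  show "\<forall>\<^sub>F y in at x within {a..b}. (f y - f x) /\<^sub>R (y - x) \<in> range of_real"
  proof (rule eventually_at_filter[THEN iffD2], rule always_eventually, intro allI impI)
    fix y assume y: "y \<in> {a..b}"
    obtain s t where "f y = of_real s" "f x = of_real t" using r y x by blast
    then have "(f y - f x) /\<^sub>R (y - x) = (of_real ((s - t) / (y - x)) :: 'k)"
      by (simp add: scaleR_conv_of_real divide_inverse mult.commute)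
    then show "(f y - f x) /\<^sub>R (y - x) \<in> range of_real" by (rule ssubst) (rule rangeI)
  qed
qed

lemma deriv_transfer:
  fixes f :: "real \<Rightarrow> 'k::real_normed_field"
  assumes x: "x \<in> {a..b}" and F: "\<forall>y\<in>{a..b}. f y = of_real (F y)"
    and d: "(f has_vector_derivative of_real r) (at x within {a..b})"
  shows "(F has_real_derivative r) (at x within {a..b})"
proof -
  have 1: "((\<lambda>y. (f y - f x) /\<^sub>R (y - x)) \<longlongrightarrow> of_real r) (at x within {a..b})" by (rule vd_quot[OF d])
  have ev: "\<forall>\<^sub>F y in at x within {a..b}. (f y - f x) /\<^sub>R (y - x) = of_real ((F y - F x) / (y - x))"
  proof (rule eventually_at_filter[THEN iffD2], rule always_eventually, intro allI impI)
    fix y assume y: "y \<in> {a..b}"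
    then show "(f y - f x) /\<^sub>R (y - x) = (of_real ((F y - F x) / (y - x)) :: 'k)"
      using F x by (simp add: scaleR_conv_of_real divide_inverse mult.commute)
  qed
  have 2: "((\<lambda>y. of_real ((F y - F x) / (y - x)) :: 'k) \<longlongrightarrow> of_real r) (at x within {a..b})"
    by (rule Lim_transform_eventually[OF 1 ev])
  have "((\<lambda>y. (F y - F x) / (y - x)) \<longlongrightarrow> r) (at x within {a..b})"
    using 2 unfolding tendsto_of_real_iff .
  then show ?thesis by (simp add: has_field_derivative_iff)
qed

lemma nderiv_real:
  fixes f :: "real \<Rightarrow> 'k::real_normed_field"
  assumes "Ck m a b f" "\<forall>y\<in>{a..b}. f y \<in> range of_real"
  shows "j \<le> m \<Longrightarrow> \<forall>y\<in>{a..b}. nderiv j a b f y \<in> range of_real"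
proof (induction j)
  case 0 then show ?case using assms by simp
next
  case (Suc j)
  show ?case
  proof
    fix y assume y: "y \<in> {a..b}"
    have "(nderiv j a b f has_vector_derivative nderiv (Suc j) a b f y) (at y within {a..b})"
      using assms(1) Suc.prems y unfolding Ck_def by auto
    then show "nderiv (Suc j) a b f y \<in> range of_real"
      using deriv_real[OF y] Suc by auto
  qed
qed

end

lemma abs_sign: "\<bar>r - L\<bar> < \<bar>L\<bar> \<Longrightarrow> r * L > (0::real)"
  by (cases "L > 0") (auto simp: zero_less_mult_iff abs_if split: if_splits)

context fixes a b :: real assumes ab: "a < b" begin

lemma real_fun:
  fixes f :: "real \<Rightarrow> 'k::real_normed_field"
  assumes "\<forall>y\<in>{a..b}. f y \<in> range of_real"
  shows "\<forall>y\<in>{a..b}. f y = of_real (rp (f y))"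
  using assms rp by metis

lemma real_deriv_setup:
  fixes f :: "real \<Rightarrow> 'k::real_normed_field"
  assumes C: "Ck (Suc m) a b f" and R: "\<forall>y\<in>{a..b}. f y \<in> range of_real"
  shows "\<forall>y\<in>{a..b}. ((\<lambda>x. rp (f x)) has_real_derivative rp (nderiv 1 a b f y)) (at y within {a..b})"
proof
  fix y assume y: "y \<in> {a..b}"
  have R1: "\<forall>y\<in>{a..b}. nderiv 1 a b f y \<in> range of_real"
    using nderiv_real[OF ab C R, of 1] by simp
  have "(f has_vector_derivative nderiv 1 a b f y) (at y within {a..b})"
    using Ck_SucD(1)[OF ab C y] .
  then have "(f has_vector_derivative of_real (rp (nderiv 1 a b f y))) (at y within {a..b})"
    using real_fun[OF R1] y by metis
  then show "((\<lambda>x. rp (f x)) has_real_derivative rp (nderiv 1 a b f y)) (at y within {a..b})"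
    by (rule deriv_transfer[OF ab y real_fun[OF R]])
qed

lemma mvt_setup:
  fixes F F' :: "real \<Rightarrow> real"
  assumes d: "\<forall>y\<in>{a..b}. (F has_real_derivative F' y) (at y within {a..b})"
    and uv: "a \<le> u" "u < v" "v \<le> b"
  shows "\<exists>z. u < z \<and> z < v \<and> F v - F u = (v - u) * F' z"
proof -
  have c: "continuous_on {a..b} F"
    using d by (meson DERIV_continuous continuous_on_eq_continuous_within)
  have dz: "DERIV F z :> F' z" if "u < z" "z < v" for z
  proof -
    have "z \<in> interior {a..b}" using that uv by simp
    then show ?thesis using d that uv at_within_interior[of z "{a..b}"] by (metis interior_subset subsetD)
  qed
  obtain l z where lz: "u < z" "z < v" "DERIV F z :> l" "F v - F u = (v - u) * l"
    using MVT[of u v F] uv continuous_on_subset[OF c, of "{u..v}"] dz real_differentiable_def by force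
  have "l = F' z" using DERIV_unique[OF lz(3) dz[OF lz(1,2)]] .
  then show ?thesis using lz by blast
qed

lemma sign_a:
  fixes f :: "real \<Rightarrow> 'k::real_normed_field"
  shows "Ck m a b f \<Longrightarrow> (\<forall>y\<in>{a..b}. f y \<in> range of_real) \<Longrightarrow> (\<forall>i<m. nderiv i a b f a = 0) \<Longrightarrow>
    nderiv m a b f a = of_real L \<Longrightarrow> L \<noteq> 0 \<Longrightarrow>
    \<exists>\<epsilon>>0. \<forall>x. a < x \<and> x < a + \<epsilon> \<longrightarrow> x \<le> b \<and> rp (f x) * L > 0"
proof (induction m arbitrary: f L)
  case 0
  have "continuous_on {a..b} f" using 0 by (simp add: Ck_0)
  then obtain d where d: "d > 0" "\<forall>x'\<in>{a..b}. dist x' a < d \<longrightarrow> dist (f x') (f a) < \<bar>L\<bar>"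
    using ab 0(5) unfolding continuous_on_iff by (metis atLeastAtMost_iff less_eq_real_def zero_less_abs_iff)
  show ?case
  proof (intro exI[of _ "min d (b - a)"] conjI allI impI)
    show "min d (b - a) > 0" using d ab by simp
    fix x assume x: "a < x \<and> x < a + min d (b - a)"
    have m: "min d (b - a) \<le> b - a" "min d (b - a) \<le> d" by auto
    then show xb: "x \<le> b" using x by linarith
    have xS: "x \<in> {a..b}" using x xb by auto
    have "x - a < d" using x m by linarith
    then have "dist x a < d" using x by (simp add: dist_real_def)
    then have "dist (f x) (f a) < \<bar>L\<bar>" using d xS by blast
    moreover have "f x = of_real (rp (f x))" using real_fun[OF 0(2)] xS by blast
    ultimately have "dist (of_real (rp (f x)) :: 'k) (of_real L) < \<bar>L\<bar>" using 0(4) by simp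
    then show "rp (f x) * L > 0" by (intro abs_sign) (simp add: dist_real_def)
  qed
next
  case (Suc m)
  let ?f' = "nderiv 1 a b f"
  have C': "Ck m a b ?f'" using Ck_SucD(2)[OF ab Suc.prems(1)] .
  have R': "\<forall>y\<in>{a..b}. ?f' y \<in> range of_real" using nderiv_real[OF ab Suc.prems(1,2), of 1] by simp
  have Z': "\<forall>i<m. nderiv i a b ?f' a = 0" using Suc.prems(3) by (simp add: nderiv_shift nderiv_shift0)
  have L': "nderiv m a b ?f' a = of_real L" using Suc.prems(4) by (simp add: nderiv_shift nderiv_shift0)
  obtain e where e: "e > 0" "\<forall>x. a < x \<and> x < a + e \<longrightarrow> x \<le> b \<and> rp (?f' x) * L > 0"
    using Suc.IH[OF C' R' Z' L' Suc.prems(5)] by blast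
  have D: "\<forall>y\<in>{a..b}. ((\<lambda>x. rp (f x)) has_real_derivative rp (?f' y)) (at y within {a..b})"
    by (rule real_deriv_setup[OF Suc.prems(1,2)])
  have fa: "rp (f a) = 0" using Suc.prems(3)
    by (metis nderiv.simps(1) of_real_0 rp_of_real zero_less_Suc)
  show ?case
  proof (intro exI[of _ e] conjI allI impI)
    show "e > 0" by fact
    fix x assume x: "a < x \<and> x < a + e"
    then show xb: "x \<le> b" using e by blast
    obtain z where z: "a < z" "z < x" "rp (f x) - rp (f a) = (x - a) * rp (?f' z)"
      using mvt_setup[OF D, of a x] x xb by auto
    have "rp (?f' z) * L > 0" using e z x by auto
    then show "rp (f x) * L > 0" using z fa x by (simp add: mult.assoc)
  qed
qed

lemma sign_b:
  fixes f :: "real \<Rightarrow> 'k::real_normed_field"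
  shows "Ck m a b f \<Longrightarrow> (\<forall>y\<in>{a..b}. f y \<in> range of_real) \<Longrightarrow> (\<forall>i<m. nderiv i a b f b = 0) \<Longrightarrow>
    nderiv m a b f b = of_real L \<Longrightarrow> L \<noteq> 0 \<Longrightarrow>
    \<exists>\<epsilon>>0. \<forall>x. b - \<epsilon> < x \<and> x < b \<longrightarrow> a \<le> x \<and> rp (f x) * L * (-1)^m > 0"
proof (induction m arbitrary: f L)
  case 0
  have "continuous_on {a..b} f" using 0 by (simp add: Ck_0)
  then obtain d where d: "d > 0" "\<forall>x'\<in>{a..b}. dist x' b < d \<longrightarrow> dist (f x') (f b) < \<bar>L\<bar>"
    using ab 0(5) unfolding continuous_on_iff by (metis atLeastAtMost_iff less_eq_real_def zero_less_abs_iff)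
  show ?case
  proof (intro exI[of _ "min d (b - a)"] conjI allI impI)
    show "min d (b - a) > 0" using d ab by simp
    fix x assume x: "b - min d (b - a) < x \<and> x < b"
    have m: "min d (b - a) \<le> b - a" "min d (b - a) \<le> d" by auto
    then show xa: "a \<le> x" using x by linarith
    have xS: "x \<in> {a..b}" using x xa by auto
    have "b - x < d" using x m by linarith
    then have "dist x b < d" using x by (simp add: dist_real_def)
    then have "dist (f x) (f b) < \<bar>L\<bar>" using d xS by blast
    moreover have "f x = of_real (rp (f x))" using real_fun[OF 0(2)] xS by blast
    ultimately have "dist (of_real (rp (f x)) :: 'k) (of_real L) < \<bar>L\<bar>" using 0(4) by simp
    then show "rp (f x) * L * (-1)^0 > 0" by simp (intro abs_sign, simp add: dist_real_def)
  qed
next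
  case (Suc m)
  let ?f' = "nderiv 1 a b f"
  have C': "Ck m a b ?f'" using Ck_SucD(2)[OF ab Suc.prems(1)] .
  have R': "\<forall>y\<in>{a..b}. ?f' y \<in> range of_real" using nderiv_real[OF ab Suc.prems(1,2), of 1] by simp
  have Z': "\<forall>i<m. nderiv i a b ?f' b = 0" using Suc.prems(3) by (simp add: nderiv_shift nderiv_shift0)
  have L': "nderiv m a b ?f' b = of_real L" using Suc.prems(4) by (simp add: nderiv_shift nderiv_shift0)
  obtain e where e: "e > 0" "\<forall>x. b - e < x \<and> x < b \<longrightarrow> a \<le> x \<and> rp (?f' x) * L * (-1)^m > 0"
    using Suc.IH[OF C' R' Z' L' Suc.prems(5)] by blast
  have D: "\<forall>y\<in>{a..b}. ((\<lambda>x. rp (f x)) has_real_derivative rp (?f' y)) (at y within {a..b})"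
    by (rule real_deriv_setup[OF Suc.prems(1,2)])
  have fb: "rp (f b) = 0" using Suc.prems(3)
    by (metis nderiv.simps(1) of_real_0 rp_of_real zero_less_Suc)
  show ?case
  proof (intro exI[of _ e] conjI allI impI)
    show "e > 0" by fact
    fix x assume x: "b - e < x \<and> x < b"
    then show xa: "a \<le> x" using e by blast
    obtain z where z: "x < z" "z < b" "rp (f b) - rp (f x) = (b - x) * rp (?f' z)"
      using mvt_setup[OF D, of x b] x xa by auto
    have "rp (?f' z) * L * (-1)^m > 0" using e z x by auto
    then have "(b - x) * (rp (?f' z) * L * (-1)^m) > 0" using x by simp
    moreover have "rp (f x) = - ((b - x) * rp (?f' z))" using z fb by linarith
    then have "rp (f x) * L * (-1) ^ Suc m = (b - x) * (rp (?f' z) * L * (-1)^m)"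
      unfolding power_Suc by (simp only:) (simp add: algebra_simps)
    ultimately show "rp (f x) * L * (-1) ^ Suc m > 0" by simp
  qed
qed

lemma pos_a:
  fixes f :: "real \<Rightarrow> 'k::real_normed_field"
  assumes C: "Ck m a b f" and N: "\<forall>y\<in>{a..b}. \<exists>r::real. r \<ge> 0 \<and> f y = of_real r"
    and Z: "\<forall>i<m. nderiv i a b f a = 0" and NZ: "nderiv m a b f a \<noteq> 0"
  shows "\<exists>L>0. nderiv m a b f a = of_real L"
proof -
  have R: "\<forall>y\<in>{a..b}. f y \<in> range of_real" using N by blast
  obtain L where L: "nderiv m a b f a = of_real L" using nderiv_real[OF ab C R, of m] ab by force
  have L0: "L \<noteq> 0" using L NZ by auto
  have "\<not> L < 0"
  proof
    assume Ln: "L < 0"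
    obtain e where e: "e > 0" "\<forall>x. a < x \<and> x < a + e \<longrightarrow> x \<le> b \<and> rp (f x) * L > 0"
      using sign_a[OF C R Z L L0] by blast
    define x where "x = a + min e (b - a) / 2"
    have x: "a < x" "x < a + e" using e ab by (auto simp: x_def)
    then have xb: "x \<le> b" "rp (f x) * L > 0" using e by auto
    have xS: "x \<in> {a..b}" using x xb by auto
    obtain r where r: "r \<ge> 0" "f x = of_real r" using N xS by blast
    then have "rp (f x) * L \<le> 0" using Ln mult_nonneg_nonpos[of r L] by simp
    then show False using xb by linarith
  qed
  then show ?thesis using L L0 by (intro exI[of _ L]) auto
qed

lemma pos_b:
  fixes f :: "real \<Rightarrow> 'k::real_normed_field"
  assumes C: "Ck m a b f" and N: "\<forall>y\<in>{a..b}. \<exists>r::real. r \<ge> 0 \<and> f y = of_real r"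
    and Z: "\<forall>i<m. nderiv i a b f b = 0" and NZ: "nderiv m a b f b \<noteq> 0"
  shows "\<exists>L. nderiv m a b f b = of_real L \<and> L * (-1)^m > 0"
proof -
  have R: "\<forall>y\<in>{a..b}. f y \<in> range of_real" using N by blast
  obtain L where L: "nderiv m a b f b = of_real L" using nderiv_real[OF ab C R, of m] ab by force
  have L0: "L \<noteq> 0" using L NZ by auto
  have "\<not> L * (-1)^m < 0"
  proof
    assume Ln: "L * (-1)^m < 0"
    obtain e where e: "e > 0" "\<forall>x. b - e < x \<and> x < b \<longrightarrow> a \<le> x \<and> rp (f x) * L * (-1)^m > 0"
      using sign_b[OF C R Z L L0] by blast
    define x where "x = b - min e (b - a) / 2"
    have x: "b - e < x" "x < b" using e ab by (auto simp: x_def)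
    then have xb: "a \<le> x" "rp (f x) * (L * (-1)^m) > 0" using e by (auto simp: mult.assoc)
    have xS: "x \<in> {a..b}" using x xb by auto
    obtain r where r: "r \<ge> 0" "f x = of_real r" using N xS by blast
    then have "rp (f x) * (L * (-1)^m) \<le> 0" using Ln mult_nonneg_nonpos[of r "L * (-1)^m"] by simp
    then show False using xb by linarith
  qed
  moreover have "L * (-1)^m \<noteq> 0" using L0 by simp
  ultimately have "L * (-1)^m > 0" by linarith
  then show ?thesis using L by blast
qed

end

context fixes a b :: real assumes ab: "a < b" begin

lemma sum_single_nz:
  fixes r m :: nat
  assumes "r \<le> m" "\<And>k. k \<le> m \<Longrightarrow> k \<noteq> r \<Longrightarrow> X k = 0"
  shows "(\<Sum>k\<le>m. X k) = (X r :: 'k::comm_monoid_add)"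
proof -
  have "(\<Sum>k\<le>m. X k) = X r + (\<Sum>k\<in>{..m} - {r}. X k)"
    using sum.remove[of "{..m}" r X, OF finite_atMost] assms(1) by simp
  also have "(\<Sum>k\<in>{..m} - {r}. X k) = 0" using assms(2) by (intro sum.neutral) auto
  finally show ?thesis by simp
qed

lemma lincomb_at_a:
  fixes F :: "nat \<Rightarrow> real \<Rightarrow> 'k::real_normed_field"
  assumes C: "\<forall>k\<le>m. Ck m a b (F k)" and Z: "\<forall>k\<le>m. \<forall>j<k. nderiv j a b (F k) a = 0"
    and r: "r \<le> m" and c: "\<forall>k<r. c k = 0"
  shows "nderiv r a b (\<lambda>x. \<Sum>k\<le>m. c k * F k x) a = c r * nderiv r a b (F r) a"
proof -
  have "nderiv r a b (\<lambda>x. \<Sum>k\<le>m. c k * F k x) a = (\<Sum>k\<le>m. c k * nderiv r a b (F k) a)"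
    using nderiv_lincomb[OF ab, of "{..m}" m F r a c] C r ab by auto
  also have "\<dots> = c r * nderiv r a b (F r) a"
  proof (rule sum_single_nz[OF r])
    fix k assume k: "k \<le> m" "k \<noteq> r"
    show "c k * nderiv r a b (F k) a = 0"
    proof (cases "k < r")
      case True then show ?thesis using c by simp
    next
      case False then have "r < k" using k by simp
      then show ?thesis using Z k by simp
    qed
  qed
  finally show ?thesis .
qed

lemma lincomb_at_b:
  fixes F :: "nat \<Rightarrow> real \<Rightarrow> 'k::real_normed_field"
  assumes C: "\<forall>k\<le>m. Ck m a b (F k)" and Z: "\<forall>k\<le>m. \<forall>j<m-k. nderiv j a b (F k) b = 0"
    and r: "r \<le> m" and c: "\<forall>k. r < k \<and> k \<le> m \<longrightarrow> c k = 0"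
  shows "nderiv (m - r) a b (\<lambda>x. \<Sum>k\<le>m. c k * F k x) b = c r * nderiv (m - r) a b (F r) b"
proof -
  have "nderiv (m - r) a b (\<lambda>x. \<Sum>k\<le>m. c k * F k x) b = (\<Sum>k\<le>m. c k * nderiv (m - r) a b (F k) b)"
    using nderiv_lincomb[OF ab, of "{..m}" m F "m - r" b c] C r ab by auto
  also have "\<dots> = c r * nderiv (m - r) a b (F r) b"
  proof (rule sum_single_nz[OF r])
    fix k assume k: "k \<le> m" "k \<noteq> r"
    show "c k * nderiv (m - r) a b (F k) b = 0"
    proof (cases "r < k")
      case True then show ?thesis using c k by simp
    next
      case False then have "m - r < m - k" using k r by simp
      then show ?thesis using Z k by simp
    qed
  qed
  finally show ?thesis .
qed

lemma tri_a:
  fixes F :: "nat \<Rightarrow> real \<Rightarrow> 'k::real_normed_field"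
  assumes C: "\<forall>k\<le>m. Ck m a b (F k)" and Z: "\<forall>k\<le>m. \<forall>j<k. nderiv j a b (F k) a = 0"
    and NZ: "\<forall>k\<le>m. nderiv k a b (F k) a \<noteq> 0"
    and D: "\<forall>i<r. nderiv i a b (\<lambda>x. \<Sum>k\<le>m. c k * F k x) a = 0"
  shows "\<forall>k. k < r \<and> k \<le> m \<longrightarrow> c k = 0"
proof (rule ccontr)
  let ?P = "\<lambda>k. k < r \<and> k \<le> m \<and> c k \<noteq> 0"
  assume "\<not> ?thesis"
  then have "\<exists>k. ?P k" by blast
  then obtain k0 where k0: "?P k0" "\<forall>k<k0. \<not> ?P k" using exists_least_iff[of ?P] by blast
  have ck: "\<forall>k<k0. c k = 0" using k0 by auto
  have "nderiv k0 a b (\<lambda>x. \<Sum>k\<le>m. c k * F k x) a = c k0 * nderiv k0 a b (F k0) a"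
    using lincomb_at_a[OF C Z _ ck] k0 by simp
  moreover have "c k0 * nderiv k0 a b (F k0) a \<noteq> 0" using k0 NZ by simp
  ultimately show False using D k0 by simp
qed

lemma tri_b:
  fixes F :: "nat \<Rightarrow> real \<Rightarrow> 'k::real_normed_field"
  assumes C: "\<forall>k\<le>m. Ck m a b (F k)" and Z: "\<forall>k\<le>m. \<forall>j<m-k. nderiv j a b (F k) b = 0"
    and NZ: "\<forall>k\<le>m. nderiv (m-k) a b (F k) b \<noteq> 0"
    and D: "\<forall>i<r. nderiv i a b (\<lambda>x. \<Sum>k\<le>m. c k * F k x) b = 0"
  shows "\<forall>k. k \<le> m \<and> m - k < r \<longrightarrow> c k = 0"
proof (rule ccontr)
  let ?P = "\<lambda>i. i \<le> m \<and> i < r \<and> c (m - i) \<noteq> 0"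
  assume "\<not> ?thesis"
  then obtain k where "k \<le> m" "m - k < r" "c k \<noteq> 0" by blast
  then have "?P (m - k)" by simp
  then have "\<exists>i. ?P i" by blast
  then obtain i0 where i0: "?P i0" "\<forall>i<i0. \<not> ?P i" using exists_least_iff[of ?P] by blast
  define k0 where "k0 = m - i0"
  have k0m: "k0 \<le> m" "m - k0 = i0" using i0 by (auto simp: k0_def)
  have ck: "\<forall>k. k0 < k \<and> k \<le> m \<longrightarrow> c k = 0"
  proof (intro allI impI)
    fix k assume k: "k0 < k \<and> k \<le> m"
    then have "m - k < i0" "m - (m - k) = k" using k0m by auto
    then show "c k = 0" using i0 k0m by (metis less_imp_le order.strict_trans diff_le_self)
  qed
  have e1: "nderiv (m - k0) a b (\<lambda>x. \<Sum>k\<le>m. c k * F k x) b = c k0 * nderiv (m - k0) a b (F k0) b"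
    using lincomb_at_b[OF C Z k0m(1) ck] .
  have "nderiv (m - k0) a b (F k0) b \<noteq> 0" using NZ k0m(1) by blast
  moreover have "c k0 \<noteq> 0" using i0 by (simp add: k0_def)
  ultimately have "c k0 * nderiv (m - k0) a b (F k0) b \<noteq> 0" by simp
  then show False using D i0 k0m e1 by simp
qed

lemma nderiv_vanish:
  assumes "\<forall>x\<in>{a..b}. G x = (0::'k::real_normed_vector)" "c \<in> {a..b}"
  shows "nderiv i a b G c = 0"
  using nderiv_cong[of a b G "\<lambda>x. 0" c i] nderiv_zero[OF ab assms(2)] assms by simp

lemma indep_a:
  fixes F :: "nat \<Rightarrow> real \<Rightarrow> 'k::real_normed_field"
  assumes C: "\<forall>k\<le>m. Ck m a b (F k)" and Z: "\<forall>k\<le>m. \<forall>j<k. nderiv j a b (F k) a = 0"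
    and NZ: "\<forall>k\<le>m. nderiv k a b (F k) a \<noteq> 0"
    and E: "\<forall>x\<in>{a..b}. (\<Sum>k\<le>m. c k * F k x) = 0"
  shows "\<forall>k\<le>m. c k = 0"
proof -
  have "\<forall>i<Suc m. nderiv i a b (\<lambda>x. \<Sum>k\<le>m. c k * F k x) a = 0"
    using nderiv_vanish[OF E] ab by auto
  from tri_a[OF C Z NZ this] show ?thesis by auto
qed

end

lemma fsum_apply: "(sum F A) x = (\<Sum>i\<in>A. F i x)"
  by (induction A rule: infinite_finite_induct) auto

lemma vs_fscale: "vector_space (fscale :: 'k::real_normed_field \<Rightarrow> (real \<Rightarrow> 'k) \<Rightarrow> _)"
  by unfold_locales (auto simp: fscale_def fun_eq_iff algebra_simps)

lemma fscale_sum_eq: "(\<Sum>k\<in>A. fscale (c k) (F k)) = (\<lambda>x. \<Sum>k\<in>A. c k * F k x :: 'k::real_normed_field)"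
  by (simp add: fun_eq_iff fsum_apply fscale_def)

lemma span_coeffs:
  fixes F :: "nat \<Rightarrow> real \<Rightarrow> 'k::real_normed_field"
  assumes inj: "inj_on F {..m}" and v: "v \<in> module.span fscale (F ` {..m})"
  shows "\<exists>c. \<forall>x. v x = (\<Sum>k\<le>m. c k * F k x)"
proof -
  interpret V: vector_space "fscale :: 'k \<Rightarrow> (real \<Rightarrow> 'k) \<Rightarrow> _" by (rule vs_fscale)
  obtain u where "v = (\<Sum>w\<in>F ` {..m}. fscale (u w) w)"
    using v V.span_finite[of "F ` {..m}"] by auto
  also have "\<dots> = (\<Sum>k\<le>m. fscale (u (F k)) (F k))" by (rule sum.reindex_cong[OF inj refl]) simp
  also have "\<dots> = (\<lambda>x. \<Sum>k\<le>m. u (F k) * F k x)" by (rule fscale_sum_eq)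
  finally show ?thesis by auto
qed

lemma lincomb_in_span:
  fixes F :: "nat \<Rightarrow> real \<Rightarrow> 'k::real_normed_field"
  shows "(\<lambda>x. \<Sum>k\<in>A. c k * F k x) \<in> module.span fscale (F ` A)"
proof -
  interpret V: vector_space "fscale :: 'k \<Rightarrow> (real \<Rightarrow> 'k) \<Rightarrow> _" by (rule vs_fscale)
  have "(\<Sum>k\<in>A. fscale (c k) (F k)) \<in> V.span (F ` A)"
    by (intro V.span_sum V.span_scale V.span_base) auto
  then show ?thesis by (simp add: fscale_sum_eq)
qed

lemma indep_family:
  fixes F :: "nat \<Rightarrow> real \<Rightarrow> 'k::real_normed_field"
  assumes inj: "inj_on F {..m}" and Z: "\<And>c. (\<forall>x. (\<Sum>k\<le>m. c k * F k x) = 0) \<Longrightarrow> \<forall>k\<le>m. c k = 0"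
  shows "module.independent fscale (F ` {..m})"
proof -
  interpret V: vector_space "fscale :: 'k \<Rightarrow> (real \<Rightarrow> 'k) \<Rightarrow> _" by (rule vs_fscale)
  show ?thesis
  proof (rule V.independent_if_scalars_zero)
    show "finite (F ` {..m})" by simp
    fix f w assume s: "(\<Sum>w\<in>F ` {..m}. fscale (f w) w) = 0" and w: "w \<in> F ` {..m}"
    have "(\<Sum>w\<in>F ` {..m}. fscale (f w) w) = (\<Sum>k\<le>m. fscale (f (F k)) (F k))"
      by (rule sum.reindex_cong[OF inj refl]) simp
    also have "\<dots> = (\<lambda>x. \<Sum>k\<le>m. f (F k) * F k x)" by (rule fscale_sum_eq)
    finally have "\<forall>x. (\<Sum>k\<le>m. f (F k) * F k x) = 0" using s by (metis zero_fun_def)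
    then have "\<forall>k\<le>m. f (F k) = 0" by (rule Z)
    then show "f w = 0" using w by auto
  qed
qed

lemma indep_card_le:
  fixes U :: "(real \<Rightarrow> 'k::real_normed_field) set"
  assumes d: "vector_space.dim fscale U = N" "N > 0" and B: "B \<subseteq> module.span fscale U"
    and i: "module.independent fscale B"
  shows "finite B \<and> card B \<le> N"
proof -
  interpret V: vector_space "fscale :: 'k \<Rightarrow> (real \<Rightarrow> 'k) \<Rightarrow> _" by (rule vs_fscale)
  obtain C where C: "C \<subseteq> U" "V.independent C" "U \<subseteq> V.span C" "card C = V.dim U" by (rule V.basis_exists)
  have fC: "finite C" using C(4) d by (metis card.infinite less_irrefl)
  have "B \<subseteq> V.span C" using B C(3) V.span_mono V.span_span by (metis subset_trans V.span_minimal V.subspace_span)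
  from V.independent_span_bound[OF fC i this] show ?thesis using C(4) d by simp
qed


lemma sum_two:
  fixes X :: "nat \<Rightarrow> 'k::comm_monoid_add"
  assumes "j < m" "\<forall>k\<le>m. k \<noteq> j \<and> k \<noteq> Suc j \<longrightarrow> X k = 0"
  shows "(\<Sum>k\<le>m. X k) = X j + X (Suc j)"
proof -
  have "(\<Sum>k\<le>m. X k) = (\<Sum>k\<in>{j, Suc j}. X k)"
    by (rule sum.mono_neutral_right) (use assms in auto)
  then show ?thesis by simp
qed

lemma sum_swap_lin:
  "(\<Sum>k\<le>n. c k * (\<Sum>j\<le>m. e k j * q j)) = (\<Sum>j\<le>m. (\<Sum>k\<le>n. c k * e k j) * (q j :: 'k::comm_ring_1))"
proof -
  have "(\<Sum>k\<le>n. c k * (\<Sum>j\<le>m. e k j * q j)) = (\<Sum>k\<le>n. \<Sum>j\<le>m. c k * e k j * q j)"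
    by (simp add: sum_distrib_left mult.assoc)
  also have "\<dots> = (\<Sum>j\<le>m. \<Sum>k\<le>n. c k * e k j * q j)" by (rule sum.swap)
  also have "\<dots> = (\<Sum>j\<le>m. (\<Sum>k\<le>n. c k * e k j) * q j)" by (simp add: sum_distrib_right)
  finally show ?thesis .
qed

lemma cont_real:
  fixes G :: "real \<Rightarrow> real"
  assumes "continuous_on S (\<lambda>x. of_real (G x) :: 'k::real_normed_div_algebra)"
  shows "continuous_on S G"
  using assms unfolding continuous_on_iff dist_of_real .

lemma lessThan_Suc_sum: "(\<Sum>k<Suc n. X k) = (\<Sum>k\<le>n. X k)"
  by (simp add: lessThan_Suc_atMost)

lemma final_step:
  fixes a b :: real and n n' :: nat
    and p :: "nat \<Rightarrow> real \<Rightarrow> 'k::real_normed_field"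
    and f0 f1 :: "real \<Rightarrow> 'k" and w \<beta> \<gamma> :: "nat \<Rightarrow> 'k" and e :: "nat \<Rightarrow> nat \<Rightarrow> 'k"
    and g F0 :: "real \<Rightarrow> real"
  assumes ab: "a < b" and nS: "n = Suc n'"
    and p0pos: "\<exists>L>0. p 0 a = of_real L"
    and F0: "\<forall>x\<in>{a..b}. F0 x > 0 \<and> f0 x = of_real (F0 x)"
    and f0a: "f0 a = \<beta> 0 * p 0 a"
    and cpos: "\<And>j. j \<le> n' \<Longrightarrow> \<exists>C>0. e (Suc j) j = of_real C"
    and dneg: "\<And>k. k \<le> n' \<Longrightarrow> \<exists>Dd<0. e k k = of_real Dd"
    and eqB: "\<And>j. j \<le> n' \<Longrightarrow> \<beta> j * e j j + \<beta> (Suc j) * e (Suc j) j = 0"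
    and eqG: "\<And>j. j \<le> n' \<Longrightarrow> \<gamma> j * e j j + \<gamma> (Suc j) * e (Suc j) j = w j"
    and w_nonneg: "\<forall>k<n. \<exists>r::real. r \<ge> 0 \<and> w k = of_real r"
    and ga: "of_real (g a) = \<gamma> 0 / \<beta> 0" and gb: "of_real (g b) = \<gamma> n / \<beta> n"
    and gc: "continuous_on {a..b} g"
    and g: "\<forall>x\<in>{a..b}. f1 x / f0 x = of_real (g x)"
    and f0nz: "\<forall>x\<in>{a..b}. f0 x \<noteq> 0"
    and \<beta>: "\<forall>x. f0 x = (\<Sum>k\<le>n. \<beta> k * p k x)" and \<gamma>: "\<forall>x. f1 x = (\<Sum>k\<le>n. \<gamma> k * p k x)"
  shows "\<exists>(t::nat \<Rightarrow> real) (\<alpha>::nat \<Rightarrow> real).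
           t 0 = a \<and> t n = b \<and> (\<forall>k\<le>n. t k \<in> {a..b}) \<and> (\<forall>k\<le>n. \<alpha> k > 0) \<and>
           (let B = (\<lambda>f::real \<Rightarrow> 'k. \<lambda>x. \<Sum>k\<le>n. f (t k) * of_real (\<alpha> k) * p k x)
            in (\<forall>x\<in>{a..b}. B f0 x = f0 x) \<and> (\<forall>x\<in>{a..b}. B f1 x = f1 x))"
proof -
  have aS: "a \<in> {a..b}" and bS: "b \<in> {a..b}" using ab by auto
    have Bpos: "\<forall>k\<le>n. \<exists>B>0. \<beta> k = of_real B"
    proof (intro allI impI)
      fix k show "k \<le> n \<Longrightarrow> \<exists>B>0. \<beta> k = of_real B"
      proof (induction k)
        case 0
        obtain L where L: "L > 0" "p 0 a = of_real L" using p0pos by auto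
        have Fa: "F0 a > 0" "f0 a = of_real (F0 a)" using F0 aS by auto
        have p0a: "p 0 a \<noteq> 0" using L by simp
        have "\<beta> 0 = f0 a / p 0 a" using f0a p0a by simp
        also have "\<dots> = of_real (F0 a / L)" using L Fa by simp
        finally show ?case using L Fa by (intro exI[of _ "F0 a / L"]) simp
      next
        case (Suc k)
        then have k: "k \<le> n'" using nS by simp
        obtain B where B: "B > 0" "\<beta> k = of_real B" using Suc by auto
        obtain C where C: "C > 0" "e (Suc k) k = of_real C" using cpos[OF k] by auto
        obtain Dd where Dd: "Dd < 0" "e k k = of_real Dd" using dneg[OF k] by auto
        have "\<beta> (Suc k) * e (Suc k) k = - (\<beta> k * e k k)" using eqB[OF k] by (simp add: eq_neg_iff_add_eq_0 add.commute)
        moreover have c0: "e (Suc k) k \<noteq> 0" using C by simp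
        ultimately have "\<beta> (Suc k) = (- (\<beta> k * e k k)) / e (Suc k) k" by (metis nonzero_mult_div_cancel_right)
        also have "\<dots> = of_real (- (B * Dd) / C)" using B C Dd by simp
        finally have eq: "\<beta> (Suc k) = of_real (- (B * Dd) / C)" .
        have "B * Dd < 0" using B Dd by (simp add: mult_pos_neg)
        then have "- (B * Dd) > 0" by simp
        then have "- (B * Dd) / C > 0" using C by (simp only: divide_pos_pos)
        then show ?case using eq by blast
      qed
    qed
    have "\<forall>k. \<exists>B. k \<le> n \<longrightarrow> B > 0 \<and> \<beta> k = of_real B" using Bpos by metis
    from choice[OF this] obtain Bf where Bf: "\<forall>k. k \<le> n \<longrightarrow> Bf k > 0 \<and> \<beta> k = of_real (Bf k)" by blast
    have bnz: "\<beta> k \<noteq> 0" if "k \<le> n" for k using Bf that by force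
    have Rrec: "\<gamma> (Suc k) / \<beta> (Suc k) = \<gamma> k / \<beta> k + w k / (e (Suc k) k * \<beta> (Suc k))" if k: "k \<le> n'" for k
    proof -
      have kn: "k \<le> n" "Suc k \<le> n" using k nS by auto
      obtain C where C: "C > 0" "e (Suc k) k = of_real C" using cpos[OF k] by auto
      have c0: "e (Suc k) k \<noteq> 0" using C by simp
      have b1: "\<beta> (Suc k) \<noteq> 0" and b2: "\<beta> k \<noteq> 0" using bnz kn by auto
      have eb: "\<beta> k * e k k = - (\<beta> (Suc k) * e (Suc k) k)" using eqB[OF k] by (simp add: eq_neg_iff_add_eq_0)
      have eg: "\<gamma> (Suc k) * e (Suc k) k = w k - \<gamma> k * e k k" using eqG[OF k] by (simp add: algebra_simps)
      have num: "\<gamma> (Suc k) * e (Suc k) k * \<beta> k - \<gamma> k * e (Suc k) k * \<beta> (Suc k) - w k * \<beta> k = 0"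
      proof -
        have "\<gamma> (Suc k) * e (Suc k) k * \<beta> k - \<gamma> k * e (Suc k) k * \<beta> (Suc k) - w k * \<beta> k
            = \<beta> k * (\<gamma> (Suc k) * e (Suc k) k - w k) - \<gamma> k * (e (Suc k) k * \<beta> (Suc k))"
          by (simp add: algebra_simps)
        also have "\<dots> = \<beta> k * (- (\<gamma> k * e k k)) - \<gamma> k * (e (Suc k) k * \<beta> (Suc k))" using eg by simp
        also have "\<dots> = - \<gamma> k * (\<beta> k * e k k + \<beta> (Suc k) * e (Suc k) k)" by (simp add: algebra_simps)
        also have "\<dots> = 0" using eqB[OF k] by simp
        finally show ?thesis .
      qed
      have "\<gamma> (Suc k) / \<beta> (Suc k) - \<gamma> k / \<beta> k - w k / (e (Suc k) k * \<beta> (Suc k))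
          = (\<gamma> (Suc k) * e (Suc k) k * \<beta> k - \<gamma> k * e (Suc k) k * \<beta> (Suc k) - w k * \<beta> k) / (e (Suc k) k * \<beta> (Suc k) * \<beta> k)"
        using c0 b1 b2 by (simp add: field_simps)
      also have "\<dots> = 0" using num by simp
      finally show ?thesis by (simp add: algebra_simps)
    qed
    have Rreal: "\<gamma> k / \<beta> k \<in> range of_real" if "k \<le> n" for k
      using that
    proof (induction k)
      case 0 then show ?case using ga by (metis rangeI)
    next
      case (Suc k)
      then have k: "k \<le> n'" "k < n" using nS by auto
      obtain r where r: "\<gamma> k / \<beta> k = of_real r" using Suc by auto
      obtain C where C: "C > 0" "e (Suc k) k = of_real C" using cpos[OF k(1)] by auto
      obtain W where W: "W \<ge> 0" "w k = of_real W" using w_nonneg k by auto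
      have "\<gamma> (Suc k) / \<beta> (Suc k) = of_real (r + W / (C * Bf (Suc k)))"
        using Rrec[OF k(1)] r C W Bf Suc.prems by simp
      then show ?case by (metis rangeI)
    qed
    define R where "R k = rp (\<gamma> k / \<beta> k)" for k
    have Rr: "\<gamma> k / \<beta> k = of_real (R k)" if "k \<le> n" for k using rp[OF Rreal[OF that]] by (simp add: R_def)
    have Rstep: "R k \<le> R (Suc k)" if k: "k \<le> n'" for k
    proof -
      have kk: "k \<le> n" "Suc k \<le> n" "k < n" using k nS by auto
      obtain C where C: "C > 0" "e (Suc k) k = of_real C" using cpos[OF k(1)] by auto
      obtain W where W: "W \<ge> 0" "w k = of_real W" using w_nonneg kk by auto
      have "(of_real (R (Suc k)) :: 'k) = of_real (R k + W / (C * Bf (Suc k)))"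
        using Rrec[OF k] Rr[OF kk(1)] Rr[OF kk(2)] C W Bf kk by simp
      then have "R (Suc k) = R k + W / (C * Bf (Suc k))" by (simp only: of_real_eq_iff)
      moreover have "Bf (Suc k) > 0" using Bf kk(2) by blast
      then have "W / (C * Bf (Suc k)) \<ge> 0" using W C by (intro divide_nonneg_pos) simp_all
      ultimately show ?thesis by simp
    qed
    have R0: "R 0 = g a" using Rr[of 0] ga by simp
    have Rn: "R n = g b" using Rr[of n] gb by simp
    have Rlo: "R 0 \<le> R k" if "k \<le> n" for k
      using that
    proof (induction k)
      case 0 then show ?case by simp
    next
      case (Suc k) then show ?case using Rstep[of k] nS by simp
    qed
    have Rhi: "R (n - i) \<le> R n" for i
    proof (induction i)
      case 0 then show ?case by simp
    next
      case (Suc i)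
      show ?case
      proof (cases "Suc i \<le> n")
        case True
        then have "n - Suc i \<le> n'" "Suc (n - Suc i) = n - i" using nS by auto
        then show ?thesis using Rstep[of "n - Suc i"] Suc.IH by simp
      next
        case False then have "n - Suc i = 0" "n - i = 0" by auto
        then show ?thesis using Suc.IH by simp
      qed
    qed
    have Rb: "g a \<le> R k \<and> R k \<le> g b" if k: "k \<le> n" for k
      using Rlo[OF k] Rhi[of "n - k"] k R0 Rn by simp
    have tex: "\<exists>s. s \<in> {a..b} \<and> g s = R k" if k: "k \<le> n" for k
    proof -
      obtain s where "a \<le> s" "s \<le> b" "g s = R k"
        using IVT'[of g a "R k" b] Rb[OF k] ab gc by auto
      then show ?thesis by auto
    qed
    define t where "t k = (if k = 0 then a else if k = n then b else (SOME s. s \<in> {a..b} \<and> g s = R k))" for k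
    have tS: "t k \<in> {a..b} \<and> g (t k) = R k" if k: "k \<le> n" for k
    proof -
      consider "k = 0" | "k = n" | "k \<noteq> 0" "k \<noteq> n" by blast
      then show ?thesis
      proof cases
        case 1 then show ?thesis using aS R0 by (simp add: t_def)
      next
        case 2 then show ?thesis using bS Rn nS by (simp add: t_def)
      next
        case 3 then show ?thesis using someI_ex[OF tex[OF k]] by (simp add: t_def)
      qed
    qed
    define \<alpha> where "\<alpha> k = Bf k / F0 (t k)" for k
    have Fpos: "F0 (t k) > 0 \<and> f0 (t k) = of_real (F0 (t k))" if "k \<le> n" for k using F0 tS[OF that] by blast
    have key0: "f0 (t k) * of_real (\<alpha> k) = \<beta> k" if k: "k \<le> n" for k
    proof -
      have "f0 (t k) * of_real (\<alpha> k) = of_real (F0 (t k) * (Bf k / F0 (t k)))"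
        using Fpos[OF k] by (simp add: \<alpha>_def)
      also have "\<dots> = of_real (Bf k)" using Fpos[OF k] by simp
      finally show ?thesis using Bf k by simp
    qed
    have key1: "f1 (t k) * of_real (\<alpha> k) = \<gamma> k" if k: "k \<le> n" for k
    proof -
      have tk: "t k \<in> {a..b}" using tS[OF k] by blast
      have "f1 (t k) / f0 (t k) = of_real (g (t k))" using g tk by blast
      then have "f1 (t k) = of_real (g (t k)) * f0 (t k)" using f0nz tk by (simp add: divide_eq_eq)
      then have "f1 (t k) * of_real (\<alpha> k) = of_real (R k) * \<beta> k" using key0[OF k] tS[OF k] by (simp add: mult.assoc)
      also have "\<dots> = \<gamma> k"
      proof -
        have "\<gamma> k = of_real (R k) * \<beta> k" using Rr[OF k] bnz[OF k] by (simp add: divide_eq_eq)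
        then show ?thesis by simp
      qed
      finally show ?thesis .
    qed
    show ?thesis
    proof (rule exI[of _ t], rule exI[of _ \<alpha>], intro conjI)
      show "t 0 = a" by (simp add: t_def)
      show "t n = b" using nS by (simp add: t_def)
      show "\<forall>k\<le>n. t k \<in> {a..b}" using tS by blast
      show "\<forall>k\<le>n. \<alpha> k > 0" using Bf Fpos by (simp add: \<alpha>_def)
      show "let B = (\<lambda>f::real \<Rightarrow> 'k. \<lambda>x. \<Sum>k\<le>n. f (t k) * of_real (\<alpha> k) * p k x)
            in (\<forall>x\<in>{a..b}. B f0 x = f0 x) \<and> (\<forall>x\<in>{a..b}. B f1 x = f1 x)"
        unfolding Let_def
      proof (intro conjI ballI)
        fix x
        have "(\<Sum>k\<le>n. f0 (t k) * of_real (\<alpha> k) * p k x) = (\<Sum>k\<le>n. \<beta> k * p k x)"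
          by (rule sum.cong[OF refl]) (simp add: key0)
        then show "(\<Sum>k\<le>n. f0 (t k) * of_real (\<alpha> k) * p k x) = f0 x" using \<beta> by metis
        have "(\<Sum>k\<le>n. f1 (t k) * of_real (\<alpha> k) * p k x) = (\<Sum>k\<le>n. \<gamma> k * p k x)"
          by (rule sum.cong[OF refl]) (simp add: key1)
        then show "(\<Sum>k\<le>n. f1 (t k) * of_real (\<alpha> k) * p k x) = f1 x" using \<gamma> by metis
      qed
    qed
qed

theorem theorem1:
  fixes a b :: real and n :: nat
    and U :: "(real \<Rightarrow> 'k::real_normed_field) set"
    and p q :: "nat \<Rightarrow> real \<Rightarrow> 'k"
    and f0 f1 :: "real \<Rightarrow> 'k"
    and w :: "nat \<Rightarrow> 'k"
  assumes ab: "a < b"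
    and U_sub: "module.subspace fscale U" and U_Cn: "U \<subseteq> Cn n a b"
    and U_dim: "vector_space.dim fscale U = n + 1"
    and p_in: "\<forall>k\<le>n. p k \<in> U"
    and p_bern: "bernstein_basis a b n p" and p_nonneg: "nonneg_system a b n p"
    and f0_in: "f0 \<in> U" and f0_pos: "\<forall>x\<in>{a..b}. \<exists>r::real. r > 0 \<and> f0 x = of_real r"
    and f1_in: "f1 \<in> U"
    and f1_incr: "\<exists>g::real \<Rightarrow> real. (\<forall>x\<in>{a..b}. f1 x / f0 x = of_real (g x)) \<and> strict_mono_on {a..b} g"
    and q_in: "\<forall>k<n. q k \<in> Dmod a b f0 U"
    and q_bern: "bernstein_basis a b (n - 1) q" and q_nonneg: "nonneg_system a b (n - 1) q"
    and w_def: "\<forall>x\<in>{a..b}. nderiv 1 a b (\<lambda>y. f1 y / f0 y) x = (\<Sum>k<n. w k * q k x)"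
    and w_nonneg: "\<forall>k<n. \<exists>r::real. r \<ge> 0 \<and> w k = of_real r"
  shows "\<exists>(t::nat \<Rightarrow> real) (\<alpha>::nat \<Rightarrow> real).
           t 0 = a \<and> t n = b \<and> (\<forall>k\<le>n. t k \<in> {a..b}) \<and> (\<forall>k\<le>n. \<alpha> k > 0) \<and>
           (let B = (\<lambda>f::real \<Rightarrow> 'k. \<lambda>x. \<Sum>k\<le>n. f (t k) * of_real (\<alpha> k) * p k x)
            in (\<forall>x\<in>{a..b}. B f0 x = f0 x) \<and> (\<forall>x\<in>{a..b}. B f1 x = f1 x))"
proof -
  interpret V: vector_space "fscale :: 'k \<Rightarrow> (real \<Rightarrow> 'k) \<Rightarrow> _" by (rule vs_fscale)
  have aS: "a \<in> {a..b}" and bS: "b \<in> {a..b}" using ab by auto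
  have CkU: "\<And>u. u \<in> U \<Longrightarrow> Ck n a b u" using U_Cn Cn_Ck by blast
  have Cp: "\<forall>k\<le>n. Ck n a b (p k)" using p_in CkU by blast
  have pza: "\<forall>k\<le>n. \<forall>j<k. nderiv j a b (p k) a = 0" and pnza: "\<forall>k\<le>n. nderiv k a b (p k) a \<noteq> 0"
    and pzb: "\<forall>k\<le>n. \<forall>j<n-k. nderiv j a b (p k) b = 0" and pnzb: "\<forall>k\<le>n. nderiv (n-k) a b (p k) b \<noteq> 0"
    using p_bern unfolding bernstein_basis_def zero_order_def by auto
  have pnn: "\<forall>k\<le>n. \<forall>y\<in>{a..b}. \<exists>r::real. r \<ge> 0 \<and> p k y = of_real r"
    using p_nonneg unfolding nonneg_system_def by auto
  have f0nz: "\<forall>x\<in>{a..b}. f0 x \<noteq> 0" using f0_pos by force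
  obtain g where g: "\<forall>x\<in>{a..b}. f1 x / f0 x = of_real (g x)" and gmono: "strict_mono_on {a..b} g"
    using f1_incr by blast
  have injp: "inj_on p {..n}"
  proof (rule inj_onI, rule ccontr)
    fix k k' assume kk: "k \<in> {..n}" "k' \<in> {..n}" "p k = p k'" "k \<noteq> k'"
    show False
    proof (cases "k < k'")
      case True
      then have "nderiv k a b (p k') a = 0" using pza kk by auto
      then show False using pnza kk by auto
    next
      case False then have "k' < k" using kk by simp
      then have "nderiv k' a b (p k) a = 0" using pza kk by auto
      then show False using pnza kk by auto
    qed
  qed
  have indP: "V.independent (p ` {..n})"
  proof (rule indep_family[OF injp])
    fix c assume h: "\<forall>x. (\<Sum>k\<le>n. c k * p k x) = 0"
    show "\<forall>k\<le>n. c k = 0" by (rule indep_a[OF ab Cp pza pnza]) (use h in simp)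
  qed
  have cardP: "card (p ` {..n}) = n + 1" using card_image[OF injp] by simp
  have spanU: "U \<subseteq> V.span (p ` {..n})"
  proof
    fix u assume u: "u \<in> U"
    show "u \<in> V.span (p ` {..n})"
    proof (rule ccontr)
      assume nu: "u \<notin> V.span (p ` {..n})"
      have "p ` {..n} \<subseteq> V.span (p ` {..n})" by (rule V.span_superset)
      then have nP: "u \<notin> p ` {..n}" using nu by blast
      have "card (insert u (p ` {..n})) = Suc (card (p ` {..n}))"
        by (rule card_insert_disjoint) (simp_all add: nP)
      then have c: "card (insert u (p ` {..n})) = n + 2" using cardP by simp
      have i: "V.independent (insert u (p ` {..n}))" by (rule V.independent_insertI[OF nu indP])
      have PU: "p ` {..n} \<subseteq> U" using p_in by auto
      have "U \<subseteq> V.span U" by (rule V.span_superset)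
      then have sub: "insert u (p ` {..n}) \<subseteq> V.span U" using u PU by blast
      have "finite (insert u (p ` {..n})) \<and> card (insert u (p ` {..n})) \<le> n + 1"
        by (rule indep_card_le[OF U_dim _ sub i]) simp
      then show False using c by linarith
    qed
  qed
  obtain \<beta> where \<beta>: "\<forall>x. f0 x = (\<Sum>k\<le>n. \<beta> k * p k x)"
    using span_coeffs[OF injp] spanU f0_in by blast
  obtain \<gamma> where \<gamma>: "\<forall>x. f1 x = (\<Sum>k\<le>n. \<gamma> k * p k x)"
    using span_coeffs[OF injp] spanU f1_in by blast
  have f0e: "f0 = (\<lambda>x. \<Sum>k\<le>n. \<beta> k * p k x)" and f1e: "f1 = (\<lambda>x. \<Sum>k\<le>n. \<gamma> k * p k x)"
    using \<beta> \<gamma> by auto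
  have f0a: "f0 a = \<beta> 0 * p 0 a" and f1a: "f1 a = \<gamma> 0 * p 0 a"
    using lincomb_at_a[OF ab Cp pza, of 0 \<beta>] lincomb_at_a[OF ab Cp pza, of 0 \<gamma>] by (simp_all flip: f0e f1e)
  have f0b: "f0 b = \<beta> n * p n b" and f1b: "f1 b = \<gamma> n * p n b"
  proof -
    have t: "\<forall>k. n < k \<and> k \<le> n \<longrightarrow> c k = 0" for c :: "nat \<Rightarrow> 'k" by auto
    show "f0 b = \<beta> n * p n b" using lincomb_at_b[OF ab Cp pzb order.refl t[of \<beta>]] \<beta> by simp
    show "f1 b = \<gamma> n * p n b" using lincomb_at_b[OF ab Cp pzb order.refl t[of \<gamma>]] \<gamma> by simp
  qed
  have p0a: "p 0 a \<noteq> 0" using pnza by force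
  have pnb: "p n b \<noteq> 0" using pnzb by force
  have ga: "of_real (g a) = \<gamma> 0 / \<beta> 0" and gb: "of_real (g b) = \<gamma> n / \<beta> n"
  proof -
    have "of_real (g a) = f1 a / f0 a" using g aS by simp
    also have "\<dots> = \<gamma> 0 / \<beta> 0" unfolding f0a f1a using p0a by simp
    finally show "of_real (g a) = \<gamma> 0 / \<beta> 0" .
    have "of_real (g b) = f1 b / f0 b" using g bS by simp
    also have "\<dots> = \<gamma> n / \<beta> n" unfolding f0b f1b using pnb by simp
    finally show "of_real (g b) = \<gamma> n / \<beta> n" .
  qed
  show ?thesis
  proof (cases n)
    case 0
    then have "g a = g b" using ga gb by (metis of_real_eq_iff)
    moreover have "g a < g b" using gmono aS bS ab by (meson strict_mono_onD)
    ultimately show ?thesis by simp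
  next
    case (Suc n')
    note nS = Suc
    have nm1: "n - 1 = n'" using nS by simp
    have qza: "\<forall>k\<le>n'. \<forall>j<k. nderiv j a b (q k) a = 0" and qnza: "\<forall>k\<le>n'. nderiv k a b (q k) a \<noteq> 0"
      and qzb: "\<forall>k\<le>n'. \<forall>j<n'-k. nderiv j a b (q k) b = 0" and qnzb: "\<forall>k\<le>n'. nderiv (n'-k) a b (q k) b \<noteq> 0"
      using q_bern unfolding bernstein_basis_def zero_order_def nm1 by auto
    have qnn: "\<forall>k\<le>n'. \<forall>y\<in>{a..b}. \<exists>r::real. r \<ge> 0 \<and> q k y = of_real r"
      using q_nonneg unfolding nonneg_system_def nm1 by auto
    have Cf0: "Ck n a b f0" using CkU f0_in by blast
    have Cinv: "Ck n a b (\<lambda>x. inverse (f0 x))" using Ck_inverse[OF ab Cf0 f0nz] .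
    define h where "h k = (\<lambda>x. p k x * inverse (f0 x))" for k
    have Ch: "\<forall>k\<le>n. Ck n a b (h k)" unfolding h_def using Cp Cinv by (auto intro!: Ck_mult[OF ab])
    define Lm where "Lm v = ext_on a b (nderiv 1 a b (\<lambda>x. v x / f0 x))" for v :: "real \<Rightarrow> 'k"
    have LmS: "\<And>v x. x \<in> {a..b} \<Longrightarrow> Lm v x = nderiv 1 a b (\<lambda>y. v y / f0 y) x"
      unfolding Lm_def ext_on_def by (rule if_P)
    have LmO: "\<And>v x. x \<notin> {a..b} \<Longrightarrow> Lm v x = 0"
      unfolding Lm_def ext_on_def by (rule if_not_P)
    have "\<forall>k. \<exists>v. k < n \<longrightarrow> v \<in> U \<and> q k = Lm v" using q_in unfolding Dmod_def Lm_def by blast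
    from choice[OF this] obtain u where u: "\<forall>k. k < n \<longrightarrow> u k \<in> U \<and> q k = Lm (u k)" by blast
    have CLm: "Ck n' a b (Lm v)" if v: "v \<in> U" for v
    proof -
      have "Ck (Suc n') a b (\<lambda>x. v x / f0 x)" using Ck_divide[OF ab CkU[OF v] Cf0 f0nz] nS by simp
      then have "Ck n' a b (nderiv 1 a b (\<lambda>x. v x / f0 x))" by (rule Ck_SucD(2)[OF ab])
      then show "Ck n' a b (Lm v)" using Ck_cong[of a b "Lm v" "nderiv 1 a b (\<lambda>x. v x / f0 x)" n'] LmS by blast
    qed
    have Cq: "\<forall>k\<le>n'. Ck n' a b (q k)"
    proof (intro allI impI)
      fix k assume "k \<le> n'"
      then have "k < n" using nS by simp
      then show "Ck n' a b (q k)" using u CLm by metis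
    qed
    have injq: "inj_on q {..n'}"
    proof (rule inj_onI, rule ccontr)
      fix k k' assume kk: "k \<in> {..n'}" "k' \<in> {..n'}" "q k = q k'" "k \<noteq> k'"
      show False
      proof (cases "k < k'")
        case True
        then have "nderiv k a b (q k') a = 0" using qza kk by auto
        then show False using qnza kk by auto
      next
        case False then have "k' < k" using kk by simp
        then have "nderiv k' a b (q k) a = 0" using qza kk by auto
        then show False using qnza kk by auto
      qed
    qed
    have indQ: "V.independent (q ` {..n'})"
    proof (rule indep_family[OF injq])
      fix c assume h: "\<forall>x. (\<Sum>k\<le>n'. c k * q k x) = 0"
      show "\<forall>k\<le>n'. c k = 0" by (rule indep_a[OF ab Cq qza qnza]) (use h in simp)
    qed
    have cardQ: "card (q ` {..n'}) = n" using card_image[OF injq] nS by simp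
    have Dh: "Lm (p k) x = nderiv 1 a b (h k) x" if "x \<in> {a..b}" for k x
    proof -
      have "Lm (p k) x = nderiv 1 a b (\<lambda>y. p k y / f0 y) x" using LmS that .
      also have "\<dots> = nderiv 1 a b (h k) x"
        by (rule nderiv_cong[OF _ that]) (simp add: h_def divide_inverse)
      finally show ?thesis .
    qed
    have Lm_lin: "Lm v x = (\<Sum>k\<le>n. c k * Lm (p k) x)" if v: "\<forall>y. v y = (\<Sum>k\<le>n. c k * p k y)" for c v x
    proof (cases "x \<in> {a..b}")
      case True
      have "Lm v x = nderiv 1 a b (\<lambda>y. v y / f0 y) x" using LmS True .
      also have "\<dots> = nderiv 1 a b (\<lambda>y. \<Sum>k\<le>n. c k * h k y) x"
        by (rule nderiv_cong[OF _ True]) (simp add: v h_def divide_inverse sum_distrib_right mult.assoc)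
      also have "\<dots> = (\<Sum>k\<le>n. c k * nderiv 1 a b (h k) x)"
        by (rule nderiv_lincomb[OF ab, of "{..n}" n]) (use Ch True nS in auto)
      also have "\<dots> = (\<Sum>k\<le>n. c k * Lm (p k) x)" using Dh True by simp
      finally show ?thesis .
    next
      case False then show ?thesis using LmO by simp
    qed
    have Lf0: "Lm f0 x = 0" for x
    proof (cases "x \<in> {a..b}")
      case True
      have "Lm f0 x = nderiv 1 a b (\<lambda>y. f0 y / f0 y) x" using LmS True .
      also have "\<dots> = nderiv 1 a b (\<lambda>y. 1) x"
        by (rule nderiv_cong[OF _ True]) (use f0nz in simp)
      also have "\<dots> = 0" by (rule deriv_eq[OF ab True]) (rule has_vector_derivative_const)
      finally show ?thesis .
    next
      case False then show ?thesis using LmO by simp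
    qed
    have E0: "(\<Sum>k\<le>n. \<beta> k * Lm (p k) x) = 0" for x using Lm_lin[OF \<beta>, of x] Lf0 by simp
    define W where "W = (\<lambda>k. Lm (p (Suc k))) ` {..n'}"
    have b0: "\<beta> 0 \<noteq> 0" using f0a f0nz aS by auto
    have D0span: "Lm (p 0) \<in> V.span W"
    proof -
      have "Lm (p 0) = (\<lambda>x. \<Sum>k\<le>n'. (- \<beta> (Suc k) / \<beta> 0) * Lm (p (Suc k)) x)"
      proof
        fix x
        have h: "\<beta> 0 * Lm (p 0) x + (\<Sum>k\<le>n'. \<beta> (Suc k) * Lm (p (Suc k)) x) = 0"
          using E0[of x] unfolding nS sum.atMost_Suc_shift .
        then have h1: "\<beta> 0 * Lm (p 0) x = - (\<Sum>k\<le>n'. \<beta> (Suc k) * Lm (p (Suc k)) x)"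
          by (simp add: eq_neg_iff_add_eq_0)
        have "Lm (p 0) x = (- (\<Sum>k\<le>n'. \<beta> (Suc k) * Lm (p (Suc k)) x)) / \<beta> 0"
          by (metis b0 h1 nonzero_mult_div_cancel_left)
        also have "\<dots> = (\<Sum>k\<le>n'. (- (\<beta> (Suc k) * Lm (p (Suc k)) x)) / \<beta> 0)"
          by (simp add: sum_divide_distrib sum_negf)
        also have "\<dots> = (\<Sum>k\<le>n'. (- \<beta> (Suc k) / \<beta> 0) * Lm (p (Suc k)) x)"
          by (intro sum.cong refl) simp
        finally show "Lm (p 0) x = (\<Sum>k\<le>n'. (- \<beta> (Suc k) / \<beta> 0) * Lm (p (Suc k)) x)" .
      qed
      also have "\<dots> \<in> V.span W" unfolding W_def by (rule lincomb_in_span)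
      finally show ?thesis .
    qed
    have Dspan: "\<forall>k\<le>n. Lm (p k) \<in> V.span W"
    proof (intro allI impI)
      fix k assume k: "k \<le> n"
      show "Lm (p k) \<in> V.span W"
      proof (cases k)
        case 0 then show ?thesis using D0span by simp
      next
        case (Suc k')
        then have "Lm (p k) \<in> W" unfolding W_def using k nS by auto
        then show ?thesis by (rule V.span_base)
      qed
    qed
    have Lspan: "Lm v \<in> V.span W" if v: "v \<in> U" for v
    proof -
      obtain c where c: "\<forall>y. v y = (\<Sum>k\<le>n. c k * p k y)" using span_coeffs[OF injp] spanU v by blast
      have "Lm v = (\<lambda>x. \<Sum>k\<le>n. c k * Lm (p k) x)" using Lm_lin[OF c] by auto
      also have "\<dots> = (\<Sum>k\<le>n. fscale (c k) (Lm (p k)))" by (rule fscale_sum_eq[symmetric])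
      also have "\<dots> \<in> V.span W" using Dspan by (intro V.span_sum V.span_scale) auto
      finally show ?thesis .
    qed
    have qW: "q ` {..n'} \<subseteq> V.span W"
    proof
      fix z assume "z \<in> q ` {..n'}"
      then obtain k where k: "k \<le> n'" "z = q k" by auto
      then have "k < n" using nS by simp
      then show "z \<in> V.span W" using u Lspan k by metis
    qed
    have cardW: "finite W" "card W \<le> n" unfolding W_def using card_image_le[of "{..n'}"] nS by auto
    have DQ: "Lm (p k) \<in> V.span (q ` {..n'})" if k: "k \<le> n" for k
    proof (rule ccontr)
      assume nq: "Lm (p k) \<notin> V.span (q ` {..n'})"
      have "q ` {..n'} \<subseteq> V.span (q ` {..n'})" by (rule V.span_superset)
      then have nQ: "Lm (p k) \<notin> q ` {..n'}" using nq by blast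
      have "card (insert (Lm (p k)) (q ` {..n'})) = Suc (card (q ` {..n'}))"
        by (rule card_insert_disjoint) (simp_all add: nQ)
      then have c: "card (insert (Lm (p k)) (q ` {..n'})) = Suc n" using cardQ by simp
      have i: "V.independent (insert (Lm (p k)) (q ` {..n'}))" by (rule V.independent_insertI[OF nq indQ])
      have sub: "insert (Lm (p k)) (q ` {..n'}) \<subseteq> V.span W" using qW Dspan k by blast
      from V.independent_span_bound[OF cardW(1) i sub] c cardW(2) show False by simp
    qed
    have "\<forall>k. \<exists>c. k \<le> n \<longrightarrow> (\<forall>x. Lm (p k) x = (\<Sum>j\<le>n'. c j * q j x))"
      using span_coeffs[OF injq] DQ by metis
    from choice[OF this] obtain e where e: "\<forall>k. k \<le> n \<longrightarrow> (\<forall>x. Lm (p k) x = (\<Sum>j\<le>n'. e k j * q j x))"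
      by blast
    have De: "nderiv 1 a b (h k) x = (\<Sum>j\<le>n'. e k j * q j x)" if "k \<le> n" "x \<in> {a..b}" for k x
      using Dh[OF that(2), of k] e that(1) by simp
    have nD: "nderiv i a b (\<lambda>x. \<Sum>j\<le>n'. e k j * q j x) c = nderiv (Suc i) a b (h k) c"
      if "k \<le> n" "c \<in> {a..b}" for k i c
    proof -
      have "nderiv i a b (\<lambda>x. \<Sum>j\<le>n'. e k j * q j x) c = nderiv i a b (nderiv 1 a b (h k)) c"
        by (rule nderiv_cong[OF _ that(2)]) (use De that(1) in simp)
      then show ?thesis by (simp add: nderiv_shift0)
    qed
    have hza: "(\<forall>i<k. nderiv i a b (h k) a = 0) \<and> nderiv k a b (h k) a = nderiv k a b (p k) a * inverse (f0 a)"
      if k: "k \<le> n" for k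
      unfolding h_def by (rule zero_mult[OF ab _ Cinv k aS]) (use Cp pza k in auto)
    have hzb: "(\<forall>i<n-k. nderiv i a b (h k) b = 0) \<and> nderiv (n-k) a b (h k) b = nderiv (n-k) a b (p k) b * inverse (f0 b)"
      if k: "k \<le> n" for k
      unfolding h_def by (rule zero_mult[OF ab _ Cinv _ bS]) (use Cp pzb k in auto)
    have ez: "e k j = 0" if k: "k \<le> n" and j: "j \<le> n'" "j \<noteq> k" "Suc j \<noteq> k" for k j
    proof (cases "j < k")
      case True
      then have jk: "j < k - 1" using j by simp
      have "\<forall>i<k - 1. nderiv i a b (\<lambda>x. \<Sum>j\<le>n'. e k j * q j x) a = 0"
        using nD[OF k aS] hza[OF k] by simp
      from tri_a[OF ab Cq qza qnza this] show ?thesis using jk j by blast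
    next
      case False
      then have kj: "k < j" using j by simp
      then have kn: "k \<le> n'" using j by simp
      have "\<forall>i<n' - k. nderiv i a b (\<lambda>x. \<Sum>j\<le>n'. e k j * q j x) b = 0"
        using nD[OF k bS] hzb[OF k] nS kn by auto
      from tri_b[OF ab Cq qzb qnzb this] show ?thesis using kj j by auto
    qed
    obtain F0 where F0: "\<forall>x\<in>{a..b}. F0 x > 0 \<and> f0 x = of_real (F0 x)"
    proof -
      have "\<forall>x. \<exists>r. x \<in> {a..b} \<longrightarrow> r > 0 \<and> f0 x = of_real r" using f0_pos by blast
      from choice[OF this] show ?thesis using that by blast
    qed
    have cpos: "\<exists>C>0. e (Suc j) j = of_real C" if j: "j \<le> n'" for j
    proof -
      have k: "Suc j \<le> n" using j nS by simp
      have "\<forall>i<j. e (Suc j) i = 0"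
      proof (intro allI impI)
        fix i assume i: "i < j"
        show "e (Suc j) i = 0" by (rule ez[OF k]) (use i j in auto)
      qed
      from lincomb_at_a[OF ab Cq qza j this]
      have "nderiv j a b (\<lambda>x. \<Sum>i\<le>n'. e (Suc j) i * q i x) a = e (Suc j) j * nderiv j a b (q j) a" .
      then have eq: "nderiv (Suc j) a b (p (Suc j)) a * inverse (f0 a) = e (Suc j) j * nderiv j a b (q j) a"
        using nD[OF k aS, of j] hza[OF k] by simp
      obtain P where P: "P > 0" "nderiv (Suc j) a b (p (Suc j)) a = of_real P"
        using pos_a[OF ab Ck_mono[OF _ k], of "p (Suc j)"] Cp pnn pza pnza k by auto
      obtain Q where Q: "Q > 0" "nderiv j a b (q j) a = of_real Q"
        using pos_a[OF ab Ck_mono[OF _ j], of "q j"] Cq qnn qza qnza j by auto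
      have Fa: "F0 a > 0" "f0 a = of_real (F0 a)" using F0 aS by auto
      have "e (Suc j) j = of_real P * inverse (of_real (F0 a)) / of_real Q"
        using eq P Q Fa by (simp add: nonzero_eq_divide_eq)
      also have "\<dots> = of_real (P / (F0 a * Q))" by (simp add: divide_inverse mult.commute)
      finally show ?thesis using P Q Fa by (intro exI[of _ "P / (F0 a * Q)"]) simp
    qed
    have dneg: "\<exists>Dd<0. e k k = of_real Dd" if k: "k \<le> n'" for k
    proof -
      have kn: "k \<le> n" using k nS by simp
      have "\<forall>i. k < i \<and> i \<le> n' \<longrightarrow> e k i = 0"
      proof (intro allI impI)
        fix i assume i: "k < i \<and> i \<le> n'"
        show "e k i = 0" by (rule ez[OF kn]) (use i in auto)
      qed
      from lincomb_at_b[OF ab Cq qzb k this]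
      have "nderiv (n' - k) a b (\<lambda>x. \<Sum>i\<le>n'. e k i * q i x) b = e k k * nderiv (n' - k) a b (q k) b" .
      moreover have "Suc (n' - k) = n - k" using k nS by simp
      ultimately have eq: "nderiv (n - k) a b (p k) b * inverse (f0 b) = e k k * nderiv (n' - k) a b (q k) b"
        using nD[OF kn bS, of "n' - k"] hzb[OF kn] by simp
      obtain P where P: "nderiv (n - k) a b (p k) b = of_real P" "P * (-1)^(n-k) > 0"
        using pos_b[OF ab Ck_mono[OF _ diff_le_self], of n "p k" k] Cp pnn pzb pnzb kn by auto
      obtain Q where Q: "nderiv (n' - k) a b (q k) b = of_real Q" "Q * (-1)^(n'-k) > 0"
        using pos_b[OF ab Ck_mono[OF _ diff_le_self], of n' "q k" k] Cq qnn qzb qnzb k by auto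
      have Fb: "F0 b > 0" "f0 b = of_real (F0 b)" using F0 bS by auto
      have Q0: "Q \<noteq> 0" using Q by auto
      have "e k k = of_real P * inverse (of_real (F0 b)) / of_real Q"
        using eq P Q Q0 Fb by (simp add: nonzero_eq_divide_eq)
      also have "\<dots> = of_real (P / (F0 b * Q))" by (simp add: divide_inverse mult.commute)
      finally have ekk: "e k k = of_real (P / (F0 b * Q))" .
      have s: "(-1::real)^(n-k) = - ((-1)^(n'-k))" using \<open>Suc (n' - k) = n - k\<close> by (metis power_Suc mult_minus1)
      have "P * Q < 0"
      proof -
        have "(P * (-1)^(n-k)) * (Q * (-1)^(n'-k)) > 0" using P Q by simp
        moreover have "(P * (-1)^(n-k)) * (Q * (-1)^(n'-k)) = - (P * Q) * ((-1)^(n'-k))^2"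
          unfolding s by (simp add: power2_eq_square algebra_simps)
        moreover have "((-1::real)^(n'-k))^2 = 1" by (simp add: power2_eq_square flip: power_mult_distrib)
        ultimately show ?thesis by simp
      qed
      then have "P / (F0 b * Q) < 0"
      proof (cases "Q > 0")
        case True
        then have "P < 0" using \<open>P * Q < 0\<close> by (simp add: mult_less_0_iff)
        moreover have "F0 b * Q > 0" using Fb True by simp
        ultimately show ?thesis by (rule divide_neg_pos)
      next
        case False
        then have "Q < 0" using Q0 by simp
        then have "P > 0" using \<open>P * Q < 0\<close> by (simp add: mult_less_0_iff)
        moreover have "F0 b * Q < 0" using Fb \<open>Q < 0\<close> by (simp add: mult_pos_neg)
        ultimately show ?thesis by (rule divide_pos_neg)
      qed
      then show ?thesis using ekk by blast
    qed
    have qlin: "(\<Sum>k\<le>n. c k * Lm (p k) x) = (\<Sum>j\<le>n'. (\<Sum>k\<le>n. c k * e k j) * q j x)" for c x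
    proof -
      have "(\<Sum>k\<le>n. c k * Lm (p k) x) = (\<Sum>k\<le>n. c k * (\<Sum>j\<le>n'. e k j * q j x))"
        using e by (intro sum.cong refl) simp
      also have "\<dots> = (\<Sum>j\<le>n'. (\<Sum>k\<le>n. c k * e k j) * q j x)" by (rule sum_swap_lin)
      finally show ?thesis .
    qed
    have two: "(\<Sum>k\<le>n. c k * e k j) = c j * e j j + c (Suc j) * e (Suc j) j" if j: "j \<le> n'" for c j
    proof (rule sum_two)
      show "j < n" using j nS by simp
      show "\<forall>k\<le>n. k \<noteq> j \<and> k \<noteq> Suc j \<longrightarrow> c k * e k j = 0"
      proof (intro allI impI)
        fix k assume k: "k \<le> n" "k \<noteq> j \<and> k \<noteq> Suc j"
        have "e k j = 0" by (rule ez[OF k(1) j]) (use k in auto)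
        then show "c k * e k j = 0" by simp
      qed
    qed
    have eqB: "\<beta> j * e j j + \<beta> (Suc j) * e (Suc j) j = 0" if j: "j \<le> n'" for j
    proof -
      have "\<forall>x\<in>{a..b}. (\<Sum>j\<le>n'. (\<Sum>k\<le>n. \<beta> k * e k j) * q j x) = 0"
      proof
        fix x show "(\<Sum>j\<le>n'. (\<Sum>k\<le>n. \<beta> k * e k j) * q j x) = 0" using E0[of x] qlin[of \<beta> x] by simp
      qed
      from indep_a[OF ab Cq qza qnza this] have "(\<Sum>k\<le>n. \<beta> k * e k j) = 0" using j by blast
      then show ?thesis using two[OF j] by simp
    qed
    have eqG: "\<gamma> j * e j j + \<gamma> (Suc j) * e (Suc j) j = w j" if j: "j \<le> n'" for j
    proof -
      have "\<forall>x\<in>{a..b}. (\<Sum>j\<le>n'. ((\<Sum>k\<le>n. \<gamma> k * e k j) - w j) * q j x) = 0"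
      proof
        fix x assume x: "x \<in> {a..b}"
        have "(\<Sum>j\<le>n'. (\<Sum>k\<le>n. \<gamma> k * e k j) * q j x) = (\<Sum>k\<le>n. \<gamma> k * Lm (p k) x)" by (rule qlin[symmetric])
        also have "\<dots> = Lm f1 x" by (rule Lm_lin[OF \<gamma>, symmetric])
        also have "\<dots> = nderiv 1 a b (\<lambda>y. f1 y / f0 y) x" using LmS x .
        also have "\<dots> = (\<Sum>j\<le>n'. w j * q j x)" using w_def x nS by (simp add: lessThan_Suc_atMost)
        finally show "(\<Sum>j\<le>n'. ((\<Sum>k\<le>n. \<gamma> k * e k j) - w j) * q j x) = 0"
          by (simp add: left_diff_distrib sum_subtractf)
      qed
      from indep_a[OF ab Cq qza qnza this] have "(\<Sum>k\<le>n. \<gamma> k * e k j) - w j = 0" using j by blast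
      then show ?thesis using two[OF j] by simp
    qed
    have p0pos: "\<exists>L>0. p 0 a = of_real L"
    proof -
      have C0: "Ck 0 a b (p 0)" using Cp Ck_mono[of n a b "p 0" 0] by simp
      have "\<exists>L>0. nderiv 0 a b (p 0) a = of_real L" by (rule pos_a[OF ab C0]) (use pnn pnza in auto)
      then show ?thesis by simp
    qed
    have C01: "Ck 0 a b (\<lambda>x. f1 x / f0 x)"
      using Ck_divide[OF ab Ck_mono[OF CkU[OF f1_in] le0] Ck_mono[OF Cf0 le0] f0nz] .
    have "continuous_on {a..b} (\<lambda>x. f1 x / f0 x)" using C01 by (simp add: Ck_0)
    then have "continuous_on {a..b} (\<lambda>x. of_real (g x) :: 'k)"
      by (rule continuous_on_cong[THEN iffD1, rotated 2]) (use g in auto)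
    then have gc: "continuous_on {a..b} g" by (rule cont_real)
    show ?thesis
      by (rule final_step[OF ab nS p0pos F0 f0a cpos dneg eqB eqG w_nonneg ga gb gc g f0nz \<beta> \<gamma>])
  qed
qed

end
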